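(* Let $L>0$. Let $\Gamma_L$ be the loop of length $L$ with a distinguished point $v$ (made into a vertex of degree two), and let $\Gamma_I$ be the interval $[0,L]$ with distinguished vertex $m$ at its midpoint $L/2$ (made into a vertex of degree two; the endpoints are degree-one vertices with Neumann condition). Then the $M$-functions $M^{\Gamma_L}_v$ and $M^{\Gamma_I}_m$ coincide, although $\Gamma_L$ and $\Gamma_I$ are not isospectral. Consequently, for every $c>0$, if $\Gamma_c$ is an interval of length $c$ attached by one endpoint at $v$ (resp. at $m$), the graphs $\Gamma_L\cup\Gamma_c$ and $\Gamma_I\cup\Gamma_c$ have the same eigenfrequencies apart from those whose eigenfunctions vanish at the attachment vertex; for $L=4$ their secular equations are $\left(-1+e^{4ik}\right)F_c(k)$ and $\left(1+e^{4ik}\right)F_c(k)$ respectively with the common factor $F_c(k)=-e^{2ick}+3e^{2i(c+2)k}+e^{4ik}-3$.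
   Context: Titchmarsh–Weil $M$-function: for a compact metric graph $\Gamma$ with a distinguished boundary vertex $v$ (all other vertices interior), and $k$ outside a discrete set, let $u$ satisfy $-u''=k^2u$ on each edge, be continuous at every vertex, satisfy the Kirchhoff condition (vanishing sum of outward normal derivatives) at every interior vertex, and have $u(v)\ne0$. Then $M^\Gamma_v(k)$ is defined by $M^\Gamma_v(k)u(v)=u'(v)$, where $u'(v)$ is the sum of outward normal derivatives of $u$ at $v$. Standard (Neumann–Kirchhoff) vertex conditions are used throughout. *)

theory Defs
  imports "HOL-Analysis.Analysis"
begin

text \<open>Compact metric graphs: a finite set of edges, each edge e identified with the
interval [0, len e], starting at vertex src e (coordinate 0) and ending at vertex
tgt e (coordinate len e).  Loops (src e = tgt e) are allowed.\<close>

record mgraph =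
  edges :: "nat set"
  len   :: "nat \<Rightarrow> real"
  src   :: "nat \<Rightarrow> nat"
  tgt   :: "nat \<Rightarrow> nat"

definition wf_graph :: "mgraph \<Rightarrow> bool" where
  "wf_graph G \<longleftrightarrow> finite (edges G) \<and> edges G \<noteq> {} \<and> (\<forall>e\<in>edges G. len G e > 0)"

definition vertices :: "mgraph \<Rightarrow> nat set" where
  "vertices G = src G ` edges G \<union> tgt G ` edges G"

text \<open>A function on the graph: one complex-valued function per edge (only its values
on [0, len e] matter).\<close>
type_synonym gfun = "nat \<Rightarrow> real \<Rightarrow> complex"

definition edge_deriv :: "real \<Rightarrow> (real \<Rightarrow> complex) \<Rightarrow> real \<Rightarrow> complex" where
  "edge_deriv l f x = vector_derivative f (at x within {0..l})"

definition edge_eq :: "real \<Rightarrow> complex \<Rightarrow> (real \<Rightarrow> complex) \<Rightarrow> bool" where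
  "edge_eq l lam f \<longleftrightarrow>
     (\<forall>x\<in>{0..l}. (f has_vector_derivative edge_deriv l f x) (at x within {0..l}) \<and>
        (edge_deriv l f has_vector_derivative (- lam * f x)) (at x within {0..l}))"

definition ends :: "mgraph \<Rightarrow> nat \<Rightarrow> (nat \<times> bool) set" where
  "ends G v = {(e, False) | e. e \<in> edges G \<and> src G e = v}
             \<union> {(e, True) | e. e \<in> edges G \<and> tgt G e = v}"

definition end_val :: "mgraph \<Rightarrow> gfun \<Rightarrow> nat \<times> bool \<Rightarrow> complex" where
  "end_val G u p = (if snd p then u (fst p) (len G (fst p)) else u (fst p) 0)"

text \<open>Normal derivative at an edge end, taken in the direction pointing away from the
vertex into the edge.\<close>
definition end_der :: "mgraph \<Rightarrow> gfun \<Rightarrow> nat \<times> bool \<Rightarrow> complex" where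
  "end_der G u p = (if snd p then - edge_deriv (len G (fst p)) (u (fst p)) (len G (fst p))
                    else edge_deriv (len G (fst p)) (u (fst p)) 0)"

definition cont_at :: "mgraph \<Rightarrow> gfun \<Rightarrow> nat \<Rightarrow> bool" where
  "cont_at G u v \<longleftrightarrow> (\<forall>p\<in>ends G v. \<forall>q\<in>ends G v. end_val G u p = end_val G u q)"

text \<open>Value u(v) at a vertex (meaningful when u is continuous at v).\<close>
definition vval :: "mgraph \<Rightarrow> gfun \<Rightarrow> nat \<Rightarrow> complex" where
  "vval G u v = end_val G u (SOME p. p \<in> ends G v)"

definition flux :: "mgraph \<Rightarrow> gfun \<Rightarrow> nat \<Rightarrow> complex" where
  "flux G u v = (\<Sum>p\<in>ends G v. end_der G u p)"

definition gsol :: "mgraph \<Rightarrow> complex \<Rightarrow> nat set \<Rightarrow> gfun \<Rightarrow> bool" where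
  "gsol G lam B u \<longleftrightarrow> (\<forall>e\<in>edges G. edge_eq (len G e) lam (u e))
      \<and> (\<forall>v\<in>vertices G. cont_at G u v)
      \<and> (\<forall>v\<in>vertices G - B. flux G u v = 0)"

definition M_rel :: "mgraph \<Rightarrow> nat \<Rightarrow> complex \<Rightarrow> complex \<Rightarrow> bool" where
  "M_rel G v k m \<longleftrightarrow> (\<exists>u. gsol G (k\<^sup>2) {v} u \<and> vval G u v \<noteq> 0 \<and> flux G u v = m * vval G u v)"

definition M_defined :: "mgraph \<Rightarrow> nat \<Rightarrow> complex \<Rightarrow> bool" where
  "M_defined G v k \<longleftrightarrow> (\<exists>!m. M_rel G v k m)"

definition M_fun :: "mgraph \<Rightarrow> nat \<Rightarrow> complex \<Rightarrow> complex" where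
  "M_fun G v k = (THE m. M_rel G v k m)"

definition nonzero_on :: "mgraph \<Rightarrow> gfun \<Rightarrow> bool" where
  "nonzero_on G u \<longleftrightarrow> (\<exists>e\<in>edges G. \<exists>x\<in>{0..len G e}. u e x \<noteq> 0)"

definition eigenfun :: "mgraph \<Rightarrow> complex \<Rightarrow> gfun \<Rightarrow> bool" where
  "eigenfun G lam u \<longleftrightarrow> gsol G lam {} u \<and> nonzero_on G u"

definition is_eigenvalue :: "mgraph \<Rightarrow> complex \<Rightarrow> bool" where
  "is_eigenvalue G lam \<longleftrightarrow> (\<exists>u. eigenfun G lam u)"

definition lin_indep_on :: "mgraph \<Rightarrow> nat \<Rightarrow> (nat \<Rightarrow> gfun) \<Rightarrow> bool" where
  "lin_indep_on G n us \<longleftrightarrow>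
     (\<forall>c::nat \<Rightarrow> complex. (\<forall>e\<in>edges G. \<forall>x\<in>{0..len G e}. (\<Sum>i<n. c i * us i e x) = 0)
        \<longrightarrow> (\<forall>i<n. c i = 0))"

definition multiplicity :: "mgraph \<Rightarrow> complex \<Rightarrow> enat" where
  "multiplicity G lam = Sup {enat n | n. \<exists>us. (\<forall>i<n. gsol G lam {} (us i)) \<and> lin_indep_on G n us}"

definition isospectral :: "mgraph \<Rightarrow> mgraph \<Rightarrow> bool" where
  "isospectral G H \<longleftrightarrow> (\<forall>lam. multiplicity G lam = multiplicity H lam)"

definition loop_graph :: "real \<Rightarrow> mgraph" where
  "loop_graph L = \<lparr>edges = {0}, len = (\<lambda>_. L), src = (\<lambda>_. 0), tgt = (\<lambda>_. 0)\<rparr>"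

text \<open>Interval [0,L] with a vertex 0 at its midpoint L/2: edge 0 is [0,L/2] running
from endpoint vertex 1 to the midpoint, edge 1 is [L/2,L] running from the midpoint to
the endpoint vertex 2.\<close>
definition interval_graph :: "real \<Rightarrow> mgraph" where
  "interval_graph L = \<lparr>edges = {0, 1}, len = (\<lambda>_. L / 2),
     src = (\<lambda>e. if e = 0 then 1 else 0), tgt = (\<lambda>e. if e = 0 then 0 else 2)\<rparr>"

definition attach_pendant :: "mgraph \<Rightarrow> nat \<Rightarrow> real \<Rightarrow> mgraph" where
  "attach_pendant G w c =
     (let ne = Suc (Max (edges G)); nv = Suc (Max (vertices G)) in
      G\<lparr>edges := insert ne (edges G), len := (len G)(ne := c),
        src := (src G)(ne := w), tgt := (tgt G)(ne := nv)\<rparr>)"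

definition F_sec :: "real \<Rightarrow> complex \<Rightarrow> complex" where
  "F_sec c k = - exp (2 * \<i> * c * k) + 3 * exp (2 * \<i> * (c + 2) * k) + exp (4 * \<i> * k) - 3"

end

theory Submission
  imports Defs
begin


definition Ck :: "complex \<Rightarrow> real \<Rightarrow> complex" where
  "Ck k x = cos (k * of_real x)"
definition Sk :: "complex \<Rightarrow> real \<Rightarrow> complex" where
  "Sk k x = (if k = 0 then of_real x else sin (k * of_real x) / k)"

lemma Ck_deriv: "(Ck k has_vector_derivative (-(k\<^sup>2) * Sk k x)) (at x within A)"
proof (cases "k = 0")
  case True
  then show ?thesis unfolding Ck_def Sk_def by (simp add: has_vector_derivative_const)
next
  case False
  have "((\<lambda>z. cos (k * z)) has_field_derivative (- sin (k * of_real x) * k)) (at (of_real x))"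
    by (auto intro!: derivative_eq_intros)
  from has_vector_derivative_real_field[OF this]
  show ?thesis using False unfolding Ck_def Sk_def by (simp add: power2_eq_square field_simps)
qed

lemma Sk_deriv: "(Sk k has_vector_derivative (Ck k x)) (at x within A)"
proof (cases "k = 0")
  case True
  have "((\<lambda>x. complex_of_real x) has_vector_derivative of_real 1) (at x within A)"
    by (intro has_vector_derivative_of_real) (auto intro!: derivative_eq_intros)
  then show ?thesis using True unfolding Ck_def Sk_def by simp
next
  case False
  have "((\<lambda>z. sin (k * z) / k) has_field_derivative (cos (k * of_real x))) (at (of_real x))"
    using False by (auto intro!: derivative_eq_intros)
  from has_vector_derivative_real_field[OF this]
  show ?thesis using False unfolding Ck_def Sk_def by simp
qed

lemma CS_0 [simp]: "Ck k 0 = 1" "Sk k 0 = 0"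
  by (auto simp: Ck_def Sk_def)

lemma CS_pyth: "(Ck k x)\<^sup>2 + k\<^sup>2 * (Sk k x)\<^sup>2 = 1"
proof (cases "k = 0")
  case False
  have "(cos (k * of_real x))\<^sup>2 + (sin (k * of_real x))\<^sup>2 = 1" by simp
  then show ?thesis using False by (simp add: Ck_def Sk_def power_divide)
qed (simp add: Ck_def Sk_def)

lemma C_add: "Ck k (x + y) = Ck k x * Ck k y - k\<^sup>2 * Sk k x * Sk k y"
  by (cases "k = 0") (auto simp: Ck_def Sk_def distrib_left cos_add power2_eq_square)

lemma S_add: "Sk k (x + y) = Sk k x * Ck k y + Ck k x * Sk k y"
  by (cases "k = 0") (auto simp: Ck_def Sk_def distrib_left sin_add field_simps)




lemma zero_deriv_const:
  fixes h :: "real \<Rightarrow> complex"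
  assumes "\<And>y. y \<in> {0..l} \<Longrightarrow> (h has_vector_derivative 0) (at y within {0..l})"
    and "x \<in> {0..l}"
  shows "h x = h 0"
proof -
  obtain c where c: "\<And>y. y \<in> {0..l} \<Longrightarrow> h y = c"
    using has_vector_derivative_zero_constant[of "{0..l}" h] assms(1) by auto
  have "0 \<in> {0..l}" using assms(2) by auto
  then show ?thesis using c assms(2) by metis
qed

lemma deriv_eq: "(f has_vector_derivative X) F \<Longrightarrow> X = Y \<Longrightarrow> (f has_vector_derivative Y) F"
  by simp

lemma edge_sol:
  assumes l: "l > 0" and eq: "edge_eq l (k\<^sup>2) f" and x: "x \<in> {0..l}"
  shows "f x = f 0 * Ck k x + edge_deriv l f 0 * Sk k x \<and>
         edge_deriv l f x = edge_deriv l f 0 * Ck k x - k\<^sup>2 * f 0 * Sk k x"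
proof -
  define g where "g = edge_deriv l f"
  have df: "\<And>y. y \<in> {0..l} \<Longrightarrow> (f has_vector_derivative g y) (at y within {0..l})"
    and dg: "\<And>y. y \<in> {0..l} \<Longrightarrow> (g has_vector_derivative (- (k\<^sup>2) * f y)) (at y within {0..l})"
    using eq unfolding edge_eq_def g_def by auto
  define h1 where "h1 y = f y * (-(k\<^sup>2) * Sk k y) - g y * Ck k y" for y
  define h2 where "h2 y = f y * Ck k y - g y * Sk k y" for y
  have dS2: "((\<lambda>y. -(k\<^sup>2) * Sk k y) has_vector_derivative (-(k\<^sup>2) * Ck k y)) (at y within {0..l})" for y
  proof -
    have "((\<lambda>y. -(k\<^sup>2) * Sk k y) has_vector_derivative (-(k\<^sup>2) * Ck k y + 0 * Sk k y)) (at y within {0..l})"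
      by (intro has_vector_derivative_mult has_vector_derivative_const Sk_deriv)
    then show ?thesis by simp
  qed
  have "(h1 has_vector_derivative 0) (at y within {0..l})" if "y \<in> {0..l}" for y
  proof -
    have "(h1 has_vector_derivative
        (f y * (-(k\<^sup>2) * Ck k y) + g y * (-(k\<^sup>2) * Sk k y)
         - (g y * (-(k\<^sup>2) * Sk k y) + (- (k\<^sup>2) * f y) * Ck k y))) (at y within {0..l})"
      unfolding h1_def
      by (intro has_vector_derivative_diff has_vector_derivative_mult df dg dS2 Ck_deriv that)
    then show ?thesis by (rule deriv_eq) (simp add: algebra_simps)
  qed
  then have H1: "h1 x = h1 0" using zero_deriv_const x by blast
  have "(h2 has_vector_derivative 0) (at y within {0..l})" if "y \<in> {0..l}" for y
  proof -
    have "(h2 has_vector_derivative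
        (f y * (-(k\<^sup>2) * Sk k y) + g y * Ck k y
         - (g y * Ck k y + (- (k\<^sup>2) * f y) * Sk k y))) (at y within {0..l})"
      unfolding h2_def
      by (intro has_vector_derivative_diff has_vector_derivative_mult df dg Sk_deriv Ck_deriv that)
    then show ?thesis by (rule deriv_eq) (simp add: algebra_simps)
  qed
  then have H2: "h2 x = h2 0" using zero_deriv_const x by blast
  have P: "(Ck k x)\<^sup>2 + k\<^sup>2 * (Sk k x)\<^sup>2 = 1" by (rule CS_pyth)
  have e1: "f x * (-(k\<^sup>2) * Sk k x) - g x * Ck k x = - g 0" using H1 by (simp add: h1_def)
  have e2: "f x * Ck k x - g x * Sk k x = f 0" using H2 by (simp add: h2_def)
  have e1': "k\<^sup>2 * f x * Sk k x + g x * Ck k x = g 0" using e1 by (simp add: algebra_simps)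
  have "f x = f x * ((Ck k x)\<^sup>2 + k\<^sup>2 * (Sk k x)\<^sup>2)" using P by simp
  also have "\<dots> = Ck k x * (f x * Ck k x - g x * Sk k x) + Sk k x * (k\<^sup>2 * f x * Sk k x + g x * Ck k x)"
    by (simp add: algebra_simps power2_eq_square)
  also have "\<dots> = f 0 * Ck k x + g 0 * Sk k x" unfolding e2 e1' by (simp add: algebra_simps)
  finally have A: "f x = f 0 * Ck k x + g 0 * Sk k x" .
  have "g x = g x * ((Ck k x)\<^sup>2 + k\<^sup>2 * (Sk k x)\<^sup>2)" using P by simp
  also have "\<dots> = Ck k x * (k\<^sup>2 * f x * Sk k x + g x * Ck k x) - k\<^sup>2 * Sk k x * (f x * Ck k x - g x * Sk k x)"
    by (simp add: algebra_simps power2_eq_square)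
  also have "\<dots> = g 0 * Ck k x - k\<^sup>2 * f 0 * Sk k x" unfolding e2 e1' by (simp add: algebra_simps)
  finally have "g x = g 0 * Ck k x - k\<^sup>2 * f 0 * Sk k x" .
  then show ?thesis using A g_def by simp
qed

lemma edge_build:
  assumes l: "l > 0"
  shows "edge_eq l (k\<^sup>2) (\<lambda>x. a * Ck k x + b * Sk k x)"
    and "x \<in> {0..l} \<Longrightarrow> edge_deriv l (\<lambda>x. a * Ck k x + b * Sk k x) x = b * Ck k x - k\<^sup>2 * a * Sk k x"
proof -
  have D: "((\<lambda>x. a * Ck k x + b * Sk k x) has_vector_derivative (b * Ck k x - k\<^sup>2 * a * Sk k x)) (at x within A)" for x A
  proof -
    have "((\<lambda>x. a * Ck k x + b * Sk k x) has_vector_derivative (a * (-(k\<^sup>2) * Sk k x) + 0 * Ck k x + (b * Ck k x + 0 * Sk k x))) (at x within A)"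
      by (intro has_vector_derivative_add has_vector_derivative_mult has_vector_derivative_const Ck_deriv Sk_deriv)
    then show ?thesis by (rule deriv_eq) (simp add: algebra_simps)
  qed
  have D2: "((\<lambda>x. b * Ck k x - k\<^sup>2 * a * Sk k x) has_vector_derivative (- (k\<^sup>2) * (a * Ck k x + b * Sk k x))) (at x within A)" for x A
  proof -
    have "((\<lambda>x. b * Ck k x - k\<^sup>2 * a * Sk k x) has_vector_derivative (b * (-(k\<^sup>2) * Sk k x) + 0 * Ck k x - (k\<^sup>2 * a * Ck k x + 0 * Sk k x))) (at x within A)"
      by (intro has_vector_derivative_diff has_vector_derivative_mult has_vector_derivative_const Ck_deriv Sk_deriv)
    then show ?thesis by (rule deriv_eq) (simp add: algebra_simps)
  qed
  have ED: "edge_deriv l (\<lambda>x. a * Ck k x + b * Sk k x) x = b * Ck k x - k\<^sup>2 * a * Sk k x" if "x \<in> {0..l}" for x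
    unfolding edge_deriv_def using vector_derivative_within_closed_interval[OF l that D] .
  show "x \<in> {0..l} \<Longrightarrow> edge_deriv l (\<lambda>x. a * Ck k x + b * Sk k x) x = b * Ck k x - k\<^sup>2 * a * Sk k x"
    by (rule ED)
  show "edge_eq l (k\<^sup>2) (\<lambda>x. a * Ck k x + b * Sk k x)"
    unfolding edge_eq_def
  proof
    fix x assume x: "x \<in> {0..l}"
    have "(edge_deriv l (\<lambda>x. a * Ck k x + b * Sk k x) has_vector_derivative (- (k\<^sup>2) * (a * Ck k x + b * Sk k x))) (at x within {0..l})"
      by (rule has_vector_derivative_transform_within[OF D2[of x "{0..l}"] zero_less_one x]) (simp add: ED)
    then show "((\<lambda>x. a * Ck k x + b * Sk k x) has_vector_derivative edge_deriv l (\<lambda>x. a * Ck k x + b * Sk k x) x) (at x within {0..l}) \<and>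
        (edge_deriv l (\<lambda>x. a * Ck k x + b * Sk k x) has_vector_derivative - (k\<^sup>2) * (a * Ck k x + b * Sk k x)) (at x within {0..l})"
      using D[of x "{0..l}"] ED[OF x] by simp
  qed
qed




lemma loop_simps [simp]: "edges (loop_graph L) = {0}" "len (loop_graph L) = (\<lambda>_. L)"
  "src (loop_graph L) = (\<lambda>_. 0)" "tgt (loop_graph L) = (\<lambda>_. 0)"
  by (auto simp: loop_graph_def)

lemma int_simps [simp]: "edges (interval_graph L) = {0,1}" "len (interval_graph L) = (\<lambda>_. L/2)"
  "src (interval_graph L) = (\<lambda>e. if e = 0 then 1 else 0)" "tgt (interval_graph L) = (\<lambda>e. if e = 0 then 0 else 2)"
  by (auto simp: interval_graph_def)

lemma loop_vertices [simp]: "vertices (loop_graph L) = {0}"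
  by (auto simp: vertices_def)
lemma int_vertices [simp]: "vertices (interval_graph L) = {0,1,2}"
  by (auto simp: vertices_def)




definition "LP L c = attach_pendant (loop_graph L) 0 c"
definition "IP L c = attach_pendant (interval_graph L) 0 c"

lemma LP_eq: "LP L c = \<lparr>edges = {0,1}, len = (\<lambda>_. L)(1 := c), src = (\<lambda>_. 0)(1 := 0), tgt = (\<lambda>_. 0)(1 := 1)\<rparr>"
proof -
  have "Max (edges (loop_graph L)) = 0" by simp
  moreover have "Max (vertices (loop_graph L)) = 0" by simp
  ultimately show ?thesis unfolding LP_def attach_pendant_def Let_def
    by (simp add: loop_graph_def) auto
qed

lemma IP_eq: "IP L c = \<lparr>edges = {0,1,2}, len = (\<lambda>_. L/2)(2 := c),
   src = (\<lambda>e. if e = 0 then 1 else 0)(2 := 0), tgt = (\<lambda>e. if e = 0 then 0 else 2)(2 := 3)\<rparr>"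
proof -
  have "Max (edges (interval_graph L)) = 1" by simp
  moreover have "Max (vertices (interval_graph L)) = 2" by simp
  ultimately show ?thesis unfolding IP_def attach_pendant_def Let_def
    by (simp add: interval_graph_def) auto
qed

lemma LP_simps [simp]: "edges (LP L c) = {0,1}" "len (LP L c) = (\<lambda>e. if e = 1 then c else L)"
  "src (LP L c) = (\<lambda>_. 0)" "tgt (LP L c) = (\<lambda>e. if e = 1 then 1 else 0)"
  by (auto simp: LP_eq fun_eq_iff)

lemma IP_simps [simp]: "edges (IP L c) = {0,1,2}" "len (IP L c) = (\<lambda>e. if e = 2 then c else L/2)"
  "src (IP L c) = (\<lambda>e. if e = 0 then 1 else 0)" "tgt (IP L c) = (\<lambda>e. if e = 0 then 0 else if e = 2 then 3 else 2)"
  by (auto simp: IP_eq fun_eq_iff)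

lemma LP_vertices [simp]: "vertices (LP L c) = {0,1}"
  by (auto simp: vertices_def)
lemma IP_vertices [simp]: "vertices (IP L c) = {0,1,2,3}"
  unfolding vertices_def by (simp add: image_insert) (auto)

lemma loop_ends: "ends (loop_graph L) 0 = {(0,False),(0,True)}"
  unfolding ends_def by (rule set_eqI, case_tac x) auto
lemma int_ends: "ends (interval_graph L) 0 = {(0,True),(1,False)}"
  "ends (interval_graph L) 1 = {(0,False)}" "ends (interval_graph L) 2 = {(1,True)}"
  unfolding ends_def by (rule set_eqI, case_tac x, auto simp: eq_commute[of 0])+
lemma LP_ends: "ends (LP L c) 0 = {(0,False),(0,True),(1,False)}" "ends (LP L c) 1 = {(1,True)}"
  unfolding ends_def by (rule set_eqI, case_tac x, auto simp: eq_commute[of 0] eq_commute[of 1])+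
lemma IP_ends0: "ends (IP L c) 0 = {(0,True),(1,False),(2,False)}"
  unfolding ends_def by (rule set_eqI, case_tac x) (auto simp: eq_commute[of 0])
lemma IP_ends1: "ends (IP L c) 1 = {(0,False)}"
  unfolding ends_def by (rule set_eqI, case_tac x) auto
lemma IP_ends2: "ends (IP L c) 2 = {(1,True)}"
  unfolding ends_def by (rule set_eqI, case_tac x) (auto simp: eq_commute[of 2])
lemma IP_ends3: "ends (IP L c) 3 = {(2,True)}"
  unfolding ends_def by (rule set_eqI, case_tac x) (auto simp: eq_commute[of 3])
lemmas IP_ends = IP_ends0 IP_ends1 IP_ends2 IP_ends3




lemma vval_eq: "cont_at G u v \<Longrightarrow> p \<in> ends G v \<Longrightarrow> vval G u v = end_val G u p"
  unfolding vval_def cont_at_def by (metis someI)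

lemma cont2: "ends G v = {p, q} \<Longrightarrow> cont_at G u v \<longleftrightarrow> end_val G u p = end_val G u q"
  unfolding cont_at_def by auto
lemma cont1: "ends G v = {p} \<Longrightarrow> cont_at G u v"
  unfolding cont_at_def by auto
lemma cont3: "ends G v = {p, q, r} \<Longrightarrow> cont_at G u v \<longleftrightarrow> end_val G u p = end_val G u q \<and> end_val G u r = end_val G u q"
  unfolding cont_at_def by auto
lemma flux1: "ends G v = {p} \<Longrightarrow> flux G u v = end_der G u p"
  unfolding flux_def by auto
lemma flux2: "ends G v = {p, q} \<Longrightarrow> p \<noteq> q \<Longrightarrow> flux G u v = end_der G u p + end_der G u q"
  unfolding flux_def by auto
lemma flux3: "ends G v = {p, q, r} \<Longrightarrow> p \<noteq> q \<Longrightarrow> p \<noteq> r \<Longrightarrow> q \<noteq> r \<Longrightarrow>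
   flux G u v = end_der G u p + end_der G u q + end_der G u r"
  unfolding flux_def by (simp add: add.assoc)

lemma int_ends_S: "ends (interval_graph L) (Suc 0) = {(0,False)}" using int_ends(2) by simp
lemma LP_ends_S: "ends (LP L c) (Suc 0) = {(1,True)}" using LP_ends(2) by simp
lemma IP_ends_S: "ends (IP L c) (Suc 0) = {(0,False)}" using IP_ends(2) by simp

lemma loop_gsol: "gsol (loop_graph L) lam B u \<longleftrightarrow> edge_eq L lam (u 0) \<and> u 0 0 = u 0 L \<and>
   (0 \<notin> B \<longrightarrow> edge_deriv L (u 0) 0 - edge_deriv L (u 0) L = 0)"
  unfolding gsol_def
  by (simp add: cont2[OF loop_ends] flux2[OF loop_ends] end_val_def end_der_def) auto

lemma loop_vval: "u 0 0 = u 0 L \<Longrightarrow> vval (loop_graph L) u 0 = u 0 0"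
  by (subst vval_eq[where p = "(0,False)"]) (auto simp: cont2[OF loop_ends] loop_ends end_val_def)
lemma loop_flux: "flux (loop_graph L) u 0 = edge_deriv L (u 0) 0 - edge_deriv L (u 0) L"
  by (simp add: flux2[OF loop_ends] end_der_def)

lemma int_gsol: "gsol (interval_graph L) lam B u \<longleftrightarrow> edge_eq (L/2) lam (u 0) \<and> edge_eq (L/2) lam (u 1) \<and>
   u 0 (L/2) = u 1 0 \<and>
   (0 \<notin> B \<longrightarrow> - edge_deriv (L/2) (u 0) (L/2) + edge_deriv (L/2) (u 1) 0 = 0) \<and>
   (1 \<notin> B \<longrightarrow> edge_deriv (L/2) (u 0) 0 = 0) \<and> (2 \<notin> B \<longrightarrow> - edge_deriv (L/2) (u 1) (L/2) = 0)"
  unfolding gsol_def int_vertices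
  apply (simp only: ball_simps insert_Diff_if Diff_empty Ball_def[symmetric] int_simps)
  apply (simp add: cont2[OF int_ends(1)] cont1[OF int_ends_S] cont1[OF int_ends(3)]
     flux2[OF int_ends(1)] flux1[OF int_ends_S] flux1[OF int_ends(3)] end_val_def end_der_def)
  done

lemma int_vval: "u 0 (L/2) = u 1 0 \<Longrightarrow> vval (interval_graph L) u 0 = u 1 0"
  by (subst vval_eq[where p = "(1,False)"]) (auto simp: cont2[OF int_ends(1)] int_ends end_val_def)
lemma int_flux: "flux (interval_graph L) u 0 = - edge_deriv (L/2) (u 0) (L/2) + edge_deriv (L/2) (u 1) 0"
  by (simp add: flux2[OF int_ends(1)] end_der_def)

lemma LP_gsol: "gsol (LP L c) lam {} u \<longleftrightarrow> edge_eq L lam (u 0) \<and> edge_eq c lam (u 1) \<and>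
   u 0 0 = u 0 L \<and> u 1 0 = u 0 L \<and>
   edge_deriv L (u 0) 0 - edge_deriv L (u 0) L + edge_deriv c (u 1) 0 = 0 \<and> - edge_deriv c (u 1) c = 0"
  unfolding gsol_def LP_vertices
  apply (simp only: ball_simps insert_Diff_if Diff_empty Ball_def[symmetric] LP_simps)
  apply (simp add: cont3[OF LP_ends(1)] cont1[OF LP_ends_S] 
     flux3[OF LP_ends(1)] flux1[OF LP_ends_S] end_val_def end_der_def)
  done

lemma LP_vval: "u 0 0 = u 0 L \<Longrightarrow> u 1 0 = u 0 L \<Longrightarrow> vval (LP L c) u 0 = u 0 0"
  by (subst vval_eq[where p = "(0,False)"]) (auto simp: cont3[OF LP_ends(1)] LP_ends end_val_def)

lemma IP_gsol: "gsol (IP L c) lam {} u \<longleftrightarrow> edge_eq (L/2) lam (u 0) \<and> edge_eq (L/2) lam (u 1) \<and> edge_eq c lam (u 2) \<and>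
   u 0 (L/2) = u 1 0 \<and> u 2 0 = u 1 0 \<and>
   - edge_deriv (L/2) (u 0) (L/2) + edge_deriv (L/2) (u 1) 0 + edge_deriv c (u 2) 0 = 0 \<and>
   edge_deriv (L/2) (u 0) 0 = 0 \<and> - edge_deriv (L/2) (u 1) (L/2) = 0 \<and> - edge_deriv c (u 2) c = 0"
  unfolding gsol_def IP_vertices
  apply (simp only: ball_simps insert_Diff_if Diff_empty Ball_def[symmetric] IP_simps)
  apply (simp add: cont3[OF IP_ends(1)] cont1[OF IP_ends_S] cont1[OF IP_ends(3)] cont1[OF IP_ends(4)]
     flux3[OF IP_ends(1)] flux1[OF IP_ends_S] flux1[OF IP_ends(3)] flux1[OF IP_ends(4)] end_val_def end_der_def)
  done

lemma IP_vval: "u 0 (L/2) = u 1 0 \<Longrightarrow> u 2 0 = u 1 0 \<Longrightarrow> vval (IP L c) u 0 = u 1 0"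
  by (subst vval_eq[where p = "(1,False)"]) (auto simp: cont3[OF IP_ends(1)] IP_ends end_val_def)




lemma edge_end:
  assumes "l > 0" "edge_eq l (k\<^sup>2) f"
  shows "f l = f 0 * Ck k l + edge_deriv l f 0 * Sk k l"
    "edge_deriv l f l = edge_deriv l f 0 * Ck k l - k\<^sup>2 * f 0 * Sk k l"
  using edge_sol[OF assms, of l] assms(1) by auto

lemma dbl: "Ck k L = (Ck k (L/2))\<^sup>2 - k\<^sup>2 * (Sk k (L/2))\<^sup>2" "Sk k L = 2 * Sk k (L/2) * Ck k (L/2)"
  using C_add[of k "L/2" "L/2"] S_add[of k "L/2" "L/2"] by (simp_all add: power2_eq_square)

lemma M_loop:
  assumes L: "L > 0" and s: "sin (k * of_real L) \<noteq> 0"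
  shows "M_rel (loop_graph L) 0 k m \<longleftrightarrow> m = 2 * k\<^sup>2 * Sk k (L/2) / Ck k (L/2)"
proof -
  have k0: "k \<noteq> 0" using s by auto
  define Ch where "Ch = Ck k (L/2)"
  define Sh where "Sh = Sk k (L/2)"
  have SL: "Sk k L \<noteq> 0" using s k0 unfolding Sk_def by simp
  have CL: "Ck k L = Ch\<^sup>2 - k\<^sup>2 * Sh\<^sup>2" and SL2: "Sk k L = 2 * Sh * Ch"
    using dbl[of k L] unfolding Ch_def Sh_def by simp_all
  have P: "Ch\<^sup>2 + k\<^sup>2 * Sh\<^sup>2 = 1" unfolding Ch_def Sh_def by (rule CS_pyth)
  have Ch0: "Ch \<noteq> 0" and Sh0: "Sh \<noteq> 0" using SL SL2 by auto
  show ?thesis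
  proof
    assume "M_rel (loop_graph L) 0 k m"
    then obtain u where g: "gsol (loop_graph L) (k\<^sup>2) {0} u" and v: "vval (loop_graph L) u 0 \<noteq> 0"
      and f: "flux (loop_graph L) u 0 = m * vval (loop_graph L) u 0"
      unfolding M_rel_def by auto
    have ee: "edge_eq L (k\<^sup>2) (u 0)" and c: "u 0 0 = u 0 L" using g by (auto simp: loop_gsol)
    define a where "a = u 0 0"
    define b where "b = edge_deriv L (u 0) 0"
    have va: "a \<noteq> 0" using v loop_vval[where u=u and L=L, OF c] a_def by simp
    have E1: "a = a * Ck k L + b * Sk k L" using c edge_end(1)[OF L ee] a_def b_def by simp
    have E2: "b - (b * Ck k L - k\<^sup>2 * a * Sk k L) = m * a"
      using f edge_end(2)[OF L ee] loop_flux loop_vval[where u=u and L=L, OF c] a_def b_def by simp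
    have "Sh * (a * k\<^sup>2 * Sh - b * Ch) = 0"
      using E1 P unfolding CL SL2 by algebra
    then have e1: "a * k\<^sup>2 * Sh = b * Ch" using Sh0 by simp
    have "a * (m * Ch - 2 * k\<^sup>2 * Sh) = 0"
      using E2 e1 P unfolding CL SL2 by algebra
    then have "m * Ch = 2 * k\<^sup>2 * Sh" using va by simp
    then show "m = 2 * k\<^sup>2 * Sk k (L/2) / Ck k (L/2)"
      using Ch0 unfolding Ch_def[symmetric] Sh_def[symmetric] by (simp add: field_simps)
  next
    assume m: "m = 2 * k\<^sup>2 * Sk k (L/2) / Ck k (L/2)"
    define u where "u = (\<lambda>e::nat. \<lambda>x. Ch * Ck k x + (k\<^sup>2 * Sh) * Sk k x)"
    have ee: "edge_eq L (k\<^sup>2) (u 0)" unfolding u_def using edge_build(1)[OF L] by simp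
    have D: "edge_deriv L (u 0) x = (k\<^sup>2 * Sh) * Ck k x - k\<^sup>2 * Ch * Sk k x" if "x \<in> {0..L}" for x
      unfolding u_def using edge_build(2)[OF L that] by simp
    have c: "u 0 0 = u 0 L" unfolding u_def CL SL2 using P by simp algebra
    have g: "gsol (loop_graph L) (k\<^sup>2) {0} u" using ee c by (simp add: loop_gsol)
    have vv: "vval (loop_graph L) u 0 = Ch" using loop_vval[where u=u and L=L, OF c] by (simp add: u_def)
    have fl: "flux (loop_graph L) u 0 = 2 * k\<^sup>2 * Sh"
      unfolding loop_flux using D[of 0] D[of L] L P unfolding CL SL2 by simp algebra
    show "M_rel (loop_graph L) 0 k m" unfolding M_rel_def
      using g vv fl Ch0 m unfolding Ch_def[symmetric] Sh_def[symmetric] by (auto simp: field_simps)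
  qed
qed

lemma M_int:
  assumes L: "L > 0" and s: "sin (k * of_real L) \<noteq> 0"
  shows "M_rel (interval_graph L) 0 k m \<longleftrightarrow> m = 2 * k\<^sup>2 * Sk k (L/2) / Ck k (L/2)"
proof -
  have k0: "k \<noteq> 0" using s by auto
  have h: "L/2 > 0" using L by simp
  define Ch where "Ch = Ck k (L/2)"
  define Sh where "Sh = Sk k (L/2)"
  have SL: "Sk k L \<noteq> 0" using s k0 unfolding Sk_def by simp
  have SL2: "Sk k L = 2 * Sh * Ch"
    using dbl[of k L] unfolding Ch_def Sh_def by simp_all
  have Ch0: "Ch \<noteq> 0" using SL SL2 by auto
  show ?thesis
  proof
    assume "M_rel (interval_graph L) 0 k m"
    then obtain u where g: "gsol (interval_graph L) (k\<^sup>2) {0} u" and v: "vval (interval_graph L) u 0 \<noteq> 0"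
      and f: "flux (interval_graph L) u 0 = m * vval (interval_graph L) u 0"
      unfolding M_rel_def by auto
    have ee0: "edge_eq (L/2) (k\<^sup>2) (u 0)" and ee1: "edge_eq (L/2) (k\<^sup>2) (u 1)"
      and c: "u 0 (L/2) = u 1 0" and n1: "edge_deriv (L/2) (u 0) 0 = 0"
      and n2: "edge_deriv (L/2) (u 1) (L/2) = 0"
      using g by (auto simp: int_gsol)
    define al where "al = u 0 0"
    define ga where "ga = u 1 0"
    define de where "de = edge_deriv (L/2) (u 1) 0"
    have vv: "vval (interval_graph L) u 0 = ga" using int_vval[where u=u and L=L, OF c] ga_def by simp
    have E1: "al * Ch = ga" using c edge_end(1)[OF h ee0] n1 al_def ga_def Ch_def by simp
    have E2: "de * Ch - k\<^sup>2 * ga * Sh = 0" using n2 edge_end(2)[OF h ee1] de_def ga_def Ch_def Sh_def by simp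
    have E3: "k\<^sup>2 * al * Sh + de = m * ga"
      using f vv edge_end(2)[OF h ee0] n1 int_flux[of L u] al_def de_def Sh_def by simp
    have "m * ga * Ch = (k\<^sup>2 * al * Sh + de) * Ch" using E3 by simp
    also have "\<dots> = k\<^sup>2 * Sh * (al * Ch) + de * Ch" by (simp add: algebra_simps)
    also have "\<dots> = 2 * k\<^sup>2 * Sh * ga" using E1 E2 by (simp add: algebra_simps)
    finally have "ga * (m * Ch - 2 * k\<^sup>2 * Sh) = 0" by (simp add: algebra_simps)
    then have "m * Ch = 2 * k\<^sup>2 * Sh" using v vv by simp
    then show "m = 2 * k\<^sup>2 * Sk k (L/2) / Ck k (L/2)"
      using Ch0 unfolding Ch_def[symmetric] Sh_def[symmetric] by (simp add: field_simps)
  next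
    assume m: "m = 2 * k\<^sup>2 * Sk k (L/2) / Ck k (L/2)"
    define u where "u = (\<lambda>e::nat. if e = 0 then (\<lambda>x. 1 * Ck k x + 0 * Sk k x) else (\<lambda>x. Ch * Ck k x + (k\<^sup>2 * Sh) * Sk k x))"
    have u0: "u 0 = (\<lambda>x. 1 * Ck k x + 0 * Sk k x)" and u1: "u 1 = (\<lambda>x. Ch * Ck k x + (k\<^sup>2 * Sh) * Sk k x)"
      unfolding u_def by auto
    have u1': "u (Suc 0) = (\<lambda>x. Ch * Ck k x + (k\<^sup>2 * Sh) * Sk k x)" using u1 by simp
    have ee0: "edge_eq (L/2) (k\<^sup>2) (u 0)" unfolding u0 by (rule edge_build(1)[OF h])
    have ee1: "edge_eq (L/2) (k\<^sup>2) (u 1)" unfolding u1 by (rule edge_build(1)[OF h])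
    have D0: "edge_deriv (L/2) (u 0) x = 0 * Ck k x - k\<^sup>2 * 1 * Sk k x" if "x \<in> {0..L/2}" for x
      unfolding u0 by (rule edge_build(2)[OF h that])
    have D1: "edge_deriv (L/2) (u 1) x = (k\<^sup>2 * Sh) * Ck k x - k\<^sup>2 * Ch * Sk k x" if "x \<in> {0..L/2}" for x
      unfolding u1 by (rule edge_build(2)[OF h that])
    have c: "u 0 (L/2) = u 1 0" unfolding u0 u1 Ch_def by simp
    have g: "gsol (interval_graph L) (k\<^sup>2) {0} u"
      unfolding int_gsol using ee0 ee1 c D0[of 0] D1[of "L/2"] h by (simp add: Ch_def Sh_def)
    have vv: "vval (interval_graph L) u 0 = Ch" using int_vval[where u=u and L=L, OF c] by (simp add: u1 u1')
    have fl: "flux (interval_graph L) u 0 = 2 * k\<^sup>2 * Sh"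
      unfolding int_flux using D0[of "L/2"] D1[of 0] h by (simp add: Sh_def)
    show "M_rel (interval_graph L) 0 k m" unfolding M_rel_def
      using g vv fl Ch0 m unfolding Ch_def[symmetric] Sh_def[symmetric] by (auto simp: field_simps)
  qed
qed

lemma S_discrete:
  assumes L: "L > 0"
  shows "\<not> z islimpt {k::complex. sin (k * of_real L) = 0}"
proof (rule discrete_imp_not_islimpt[of "pi / L"])
  show "0 < pi / L" using L by simp
next
  fix x y assume x: "x \<in> {k::complex. sin (k * of_real L) = 0}" and y: "y \<in> {k::complex. sin (k * of_real L) = 0}"
    and d: "dist y x < pi / L"
  obtain n :: int where n: "x * of_real L = of_real (n * pi)" using x by (auto simp: sin_eq_0)
  obtain m :: int where m: "y * of_real L = of_real (m * pi)" using y by (auto simp: sin_eq_0)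
  have xn: "x = of_real (n * pi / L)" using n L by (simp add: field_simps)
  have ym: "y = of_real (m * pi / L)" using m L by (simp add: field_simps)
  have "y - x = of_real (m * pi / L - n * pi / L)" unfolding xn ym by (simp only: of_real_diff)
  then have "dist y x = \<bar>m * pi / L - n * pi / L\<bar>" by (simp only: dist_norm norm_of_real)
  also have "\<dots> = \<bar>real_of_int (m - n)\<bar> * (pi / L)" using L
    by (simp add: abs_mult flip: diff_divide_distrib left_diff_distrib)
  finally have "\<bar>real_of_int (m - n)\<bar> * (pi / L) < 1 * (pi / L)" using d by simp
  then have "\<bar>real_of_int (m - n)\<bar> < 1" using L by (simp only: mult_less_cancel_right) simp
  then have "m = n" by linarith
  then show "y = x" using xn ym by simp
qed

lemma part1:
  assumes L: "L > 0"
  shows "\<exists>S :: complex set. (\<forall>z. \<not> z islimpt S) \<and>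
           (\<forall>k. k \<notin> S \<longrightarrow> M_defined (loop_graph L) 0 k \<and> M_defined (interval_graph L) 0 k \<and>
                M_fun (loop_graph L) 0 k = M_fun (interval_graph L) 0 k)"
proof (intro exI conjI allI impI)
  fix z show "\<not> z islimpt {k::complex. sin (k * of_real L) = 0}" by (rule S_discrete[OF L])
next
  fix k assume "k \<notin> {k::complex. sin (k * of_real L) = 0}"
  then have s: "sin (k * of_real L) \<noteq> 0" by simp
  note A = M_loop[OF L s] and B = M_int[OF L s]
  show "M_defined (loop_graph L) 0 k" unfolding M_defined_def A by simp
  show "M_defined (interval_graph L) 0 k" unfolding M_defined_def B by simp
  show "M_fun (loop_graph L) 0 k = M_fun (interval_graph L) 0 k" unfolding M_fun_def A B by simp
qed




lemma part2:
  assumes L: "L > 0"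
  shows "\<not> isospectral (loop_graph L) (interval_graph L)"
proof -
  define k :: complex where "k = of_real (pi / L)"
  have k0: "k \<noteq> 0" using L by (simp add: k_def)
  have h: "L/2 > 0" using L by simp
  have e1: "pi / L * L = pi" "pi / L * (L/2) = pi / 2" using L by simp_all
  have e2: "k * of_real L = of_real pi" "k * of_real (L/2) = of_real (pi/2)"
    unfolding k_def by (metis e1 of_real_mult)+
  have CL: "Ck k L = -1" unfolding Ck_def e2 cos_of_real by simp
  have SL: "Sk k L = 0" unfolding Sk_def e2 sin_of_real using k0 by simp
  have Ch: "Ck k (L/2) = 0" unfolding Ck_def e2 cos_of_real by simp
  define lam where "lam = k\<^sup>2"
  have m0: "multiplicity (loop_graph L) lam = 0"
    unfolding multiplicity_def
  proof (rule antisym)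
    show "Sup {enat n |n. \<exists>us. (\<forall>i<n. gsol (loop_graph L) lam {} (us i)) \<and> lin_indep_on (loop_graph L) n us} \<le> 0"
    proof (rule Sup_least, clarify)
      fix n us assume g: "\<forall>i<n. gsol (loop_graph L) lam {} (us i)" and li: "lin_indep_on (loop_graph L) n us"
      show "enat n \<le> 0"
      proof (rule ccontr)
        assume "\<not> enat n \<le> 0"
        then have n0: "0 < n" by (simp add: zero_enat_def)
        define u where "u = us 0"
        have gu: "gsol (loop_graph L) (k\<^sup>2) {} u" using g n0 u_def lam_def by auto
        have ee: "edge_eq L (k\<^sup>2) (u 0)" and c: "u 0 0 = u 0 L"
          and kf: "edge_deriv L (u 0) 0 - edge_deriv L (u 0) L = 0"
          using gu by (auto simp: loop_gsol)
        define a where "a = u 0 0"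
        define b where "b = edge_deriv L (u 0) 0"
        have "a = - a" using c edge_end(1)[OF L ee] CL SL a_def b_def by simp
        then have a0: "a = 0" by simp
        have "b + b = 0" using kf edge_end(2)[OF L ee] CL SL a_def b_def by simp
        then have b0: "b = 0" by simp
        have z: "u 0 x = 0" if "x \<in> {0..L}" for x
          using edge_sol[OF L ee that] a0 b0 a_def b_def by simp
        define cc :: "nat \<Rightarrow> complex" where "cc = (\<lambda>i. if i = 0 then 1 else 0)"
        have "\<forall>e\<in>edges (loop_graph L). \<forall>x\<in>{0..len (loop_graph L) e}. (\<Sum>i<n. cc i * us i e x) = 0"
        proof (intro ballI)
          fix e x assume e: "e \<in> edges (loop_graph L)" and x: "x \<in> {0..len (loop_graph L) e}"
          have "(\<Sum>i<n. cc i * us i e x) = (\<Sum>i<n. if i = 0 then us i e x else 0)"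
            by (rule sum.cong) (auto simp: cc_def)
          also have "\<dots> = us 0 e x" using n0 by (simp add: sum.delta)
          finally have "(\<Sum>i<n. cc i * us i e x) = us 0 e x" .
          then show "(\<Sum>i<n. cc i * us i e x) = 0" using e x z u_def by simp
        qed
        then have "cc 0 = 0" using li n0 unfolding lin_indep_on_def by blast
        then show False unfolding cc_def by simp
      qed
    qed
  qed simp
  have m1: "multiplicity (interval_graph L) lam \<noteq> 0"
  proof -
    define Sh where "Sh = Sk k (L/2)"
    define u where "u = (\<lambda>e::nat. if e = 0 then (\<lambda>x. 1 * Ck k x + 0 * Sk k x) else (\<lambda>x. 0 * Ck k x + (-(k\<^sup>2) * Sh) * Sk k x))"
    have u0: "u 0 = (\<lambda>x. 1 * Ck k x + 0 * Sk k x)" and u1: "u 1 = (\<lambda>x. 0 * Ck k x + (-(k\<^sup>2) * Sh) * Sk k x)"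
      unfolding u_def by auto
    have u1': "u (Suc 0) = (\<lambda>x. 0 * Ck k x + (-(k\<^sup>2) * Sh) * Sk k x)" using u1 by simp
    have ee0: "edge_eq (L/2) (k\<^sup>2) (u 0)" unfolding u0 by (rule edge_build(1)[OF h])
    have ee1: "edge_eq (L/2) (k\<^sup>2) (u 1)" unfolding u1 by (rule edge_build(1)[OF h])
    have D0: "edge_deriv (L/2) (u 0) x = 0 * Ck k x - k\<^sup>2 * 1 * Sk k x" if "x \<in> {0..L/2}" for x
      unfolding u0 by (rule edge_build(2)[OF h that])
    have D1: "edge_deriv (L/2) (u 1) x = (-(k\<^sup>2) * Sh) * Ck k x - k\<^sup>2 * 0 * Sk k x" if "x \<in> {0..L/2}" for x
      unfolding u1 by (rule edge_build(2)[OF h that])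
    have c: "u 0 (L/2) = u 1 0" unfolding u0 u1 Ch by simp
    have g: "gsol (interval_graph L) lam {} u"
      unfolding int_gsol lam_def using ee0 ee1 c D0[of 0] D0[of "L/2"] D1[of 0] D1[of "L/2"] h Ch
      by (simp add: Sh_def)
    have li: "lin_indep_on (interval_graph L) 1 (\<lambda>_. u)"
      unfolding lin_indep_on_def
    proof (intro allI impI)
      fix cc :: "nat \<Rightarrow> complex" and i :: nat
      assume A: "\<forall>e\<in>edges (interval_graph L). \<forall>x\<in>{0..len (interval_graph L) e}. (\<Sum>i<1. cc i * u e x) = 0"
        and i: "i < 1"
      have "0 \<in> edges (interval_graph L)" by simp
      moreover have "(0::real) \<in> {0..len (interval_graph L) 0}" using h by simp
      ultimately have "(\<Sum>i<1. cc i * u 0 0) = 0" using A by blast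
      then show "cc i = 0" using i by (simp add: u0)
    qed
    have "enat 1 \<in> {enat n |n. \<exists>us. (\<forall>i<n. gsol (interval_graph L) lam {} (us i)) \<and> lin_indep_on (interval_graph L) n us}"
      using g li by (intro CollectI exI[of _ 1]) (auto intro!: exI[of _ "\<lambda>_. u"])
    then have "enat 1 \<le> multiplicity (interval_graph L) lam" unfolding multiplicity_def by (rule Sup_upper)
    then show ?thesis by (auto simp: zero_enat_def)
  qed
  show ?thesis unfolding isospectral_def using m0 m1 by metis
qed




definition Qc :: "real \<Rightarrow> real \<Rightarrow> complex \<Rightarrow> bool" where
  "Qc L c k \<longleftrightarrow> (\<exists>p0 p1. p0 \<noteq> 0 \<and> p1 * Ck k c - k\<^sup>2 * p0 * Sk k c = 0 \<and> Ck k (L/2) \<noteq> 0 \<and>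
      2 * k\<^sup>2 * p0 * Sk k (L/2) + p1 * Ck k (L/2) = 0)"

lemma LP_Q:
  assumes L: "L > 0" and c: "c > 0"
  shows "(\<exists>u. eigenfun (LP L c) (k\<^sup>2) u \<and> vval (LP L c) u 0 \<noteq> 0) \<longleftrightarrow> Qc L c k"
proof -
  define Ch where "Ch = Ck k (L/2)"
  define Sh where "Sh = Sk k (L/2)"
  have CL: "Ck k L = Ch\<^sup>2 - k\<^sup>2 * Sh\<^sup>2" and SL2: "Sk k L = 2 * Sh * Ch"
    using dbl[of k L] unfolding Ch_def Sh_def by simp_all
  have P: "Ch\<^sup>2 + k\<^sup>2 * Sh\<^sup>2 = 1" unfolding Ch_def Sh_def by (rule CS_pyth)
  show ?thesis
  proof
    assume "\<exists>u. eigenfun (LP L c) (k\<^sup>2) u \<and> vval (LP L c) u 0 \<noteq> 0"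
    then obtain u where g: "gsol (LP L c) (k\<^sup>2) {} u" and v: "vval (LP L c) u 0 \<noteq> 0"
      unfolding eigenfun_def by auto
    have ee0: "edge_eq L (k\<^sup>2) (u 0)" and ee1: "edge_eq c (k\<^sup>2) (u 1)"
      and c1: "u 0 0 = u 0 L" and c2: "u 1 0 = u 0 L"
      and kf: "edge_deriv L (u 0) 0 - edge_deriv L (u 0) L + edge_deriv c (u 1) 0 = 0"
      and nf: "- edge_deriv c (u 1) c = 0"
      using g by (auto simp: LP_gsol)
    define a where "a = u 0 0"
    define b where "b = edge_deriv L (u 0) 0"
    define p0 where "p0 = u 1 0"
    define p1 where "p1 = edge_deriv c (u 1) 0"
    have va: "a \<noteq> 0" using v LP_vval[where u=u and L=L and c=c, OF c1 c2] a_def by simp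
    have E1: "a = a * Ck k L + b * Sk k L" using c1 edge_end(1)[OF L ee0] a_def b_def by simp
    have E2: "p0 = a" using c1 c2 a_def p0_def by simp
    have E3: "b - (b * Ck k L - k\<^sup>2 * a * Sk k L) + p1 = 0"
      using kf edge_end(2)[OF L ee0] a_def b_def p1_def by simp
    have E4: "p1 * Ck k c - k\<^sup>2 * p0 * Sk k c = 0" using nf edge_end(2)[OF c ee1] p0_def p1_def by simp
    have Ch0: "Ch \<noteq> 0"
    proof
      assume "Ch = 0"
      then have "k\<^sup>2 * Sh\<^sup>2 = 1" using P by simp
      then have "a = - a" using E1 unfolding CL SL2 \<open>Ch = 0\<close> by simp
      then show False using va by simp
    qed
    have "2 * k\<^sup>2 * a * Sh + p1 * Ch = 0"
      using E1 E3 P unfolding CL SL2 by algebra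
    then show "Qc L c k" unfolding Qc_def using E2 E4 va Ch0 Ch_def Sh_def by metis
  next
    assume "Qc L c k"
    then obtain p0 p1 where p0: "p0 \<noteq> 0" and E4: "p1 * Ck k c - k\<^sup>2 * p0 * Sk k c = 0"
      and Ch0: "Ch \<noteq> 0" and K: "2 * k\<^sup>2 * p0 * Sh + p1 * Ch = 0"
      unfolding Qc_def Ch_def Sh_def by blast
    define b where "b = k\<^sup>2 * p0 * Sh / Ch"
    have bC: "b * Ch = k\<^sup>2 * p0 * Sh" using Ch0 by (simp add: b_def)
    define u where "u = (\<lambda>e::nat. if e = 0 then (\<lambda>x. p0 * Ck k x + b * Sk k x) else (\<lambda>x. p0 * Ck k x + p1 * Sk k x))"
    have u0: "u 0 = (\<lambda>x. p0 * Ck k x + b * Sk k x)" and u1: "u 1 = (\<lambda>x. p0 * Ck k x + p1 * Sk k x)"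
      unfolding u_def by auto
    have u1': "u (Suc 0) = (\<lambda>x. p0 * Ck k x + p1 * Sk k x)" using u1 by simp
    have ee0: "edge_eq L (k\<^sup>2) (u 0)" unfolding u0 by (rule edge_build(1)[OF L])
    have ee1: "edge_eq c (k\<^sup>2) (u 1)" unfolding u1 by (rule edge_build(1)[OF c])
    have D0: "edge_deriv L (u 0) x = b * Ck k x - k\<^sup>2 * p0 * Sk k x" if "x \<in> {0..L}" for x
      unfolding u0 by (rule edge_build(2)[OF L that])
    have D1: "edge_deriv c (u 1) x = p1 * Ck k x - k\<^sup>2 * p0 * Sk k x" if "x \<in> {0..c}" for x
      unfolding u1 by (rule edge_build(2)[OF c that])
    have "p0 * Ck k L + b * Sk k L = p0" using bC P unfolding CL SL2 by algebra
    then have c1: "u 0 0 = u 0 L" and c2: "u 1 0 = u 0 L" unfolding u0 u1 by simp_all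
    have "Ch * (b - (b * Ck k L - k\<^sup>2 * p0 * Sk k L) + p1) = 0"
      using bC P K unfolding CL SL2 by algebra
    then have kf: "b - (b * Ck k L - k\<^sup>2 * p0 * Sk k L) + p1 = 0" using Ch0 by simp
    have g: "gsol (LP L c) (k\<^sup>2) {} u"
      unfolding LP_gsol using ee0 ee1 c1 c2 D0[of 0] D0[of L] D1[of 0] D1[of c] L c kf E4
      by (simp add: u1')
    have nz: "nonzero_on (LP L c) u"
      unfolding nonzero_on_def using p0 L by (auto simp: u0 intro!: bexI[of _ 0])
    have vv: "vval (LP L c) u 0 = p0" using LP_vval[where u=u and L=L and c=c, OF c1 c2] by (simp add: u0)
    show "\<exists>u. eigenfun (LP L c) (k\<^sup>2) u \<and> vval (LP L c) u 0 \<noteq> 0"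
      using g nz vv p0 unfolding eigenfun_def by auto
  qed
qed

lemma alg_IP: "k\<^sup>2 * al * Sh + de + p1 = (0::complex) \<Longrightarrow> al * Ch = ga \<Longrightarrow> de * Ch - k\<^sup>2 * ga * Sh = 0 \<Longrightarrow> 2 * k\<^sup>2 * ga * Sh + p1 * Ch = 0"
  by algebra

lemma IP_Q:
  assumes L: "L > 0" and c: "c > 0"
  shows "(\<exists>u. eigenfun (IP L c) (k\<^sup>2) u \<and> vval (IP L c) u 0 \<noteq> 0) \<longleftrightarrow> Qc L c k"
proof -
  have h: "L/2 > 0" using L by simp
  define Ch where "Ch = Ck k (L/2)"
  define Sh where "Sh = Sk k (L/2)"
  show ?thesis
  proof
    assume "\<exists>u. eigenfun (IP L c) (k\<^sup>2) u \<and> vval (IP L c) u 0 \<noteq> 0"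
    then obtain u where g: "gsol (IP L c) (k\<^sup>2) {} u" and v: "vval (IP L c) u 0 \<noteq> 0"
      unfolding eigenfun_def by auto
    have ee0: "edge_eq (L/2) (k\<^sup>2) (u 0)" and ee1: "edge_eq (L/2) (k\<^sup>2) (u 1)" and ee2: "edge_eq c (k\<^sup>2) (u 2)"
      and c1: "u 0 (L/2) = u 1 0" and c2: "u 2 0 = u 1 0"
      and kf: "- edge_deriv (L/2) (u 0) (L/2) + edge_deriv (L/2) (u 1) 0 + edge_deriv c (u 2) 0 = 0"
      and n1: "edge_deriv (L/2) (u 0) 0 = 0" and n2: "- edge_deriv (L/2) (u 1) (L/2) = 0"
      and n3: "- edge_deriv c (u 2) c = 0"
      using g by (auto simp: IP_gsol)
    define al where "al = u 0 0"
    define ga where "ga = u 1 0"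
    define de where "de = edge_deriv (L/2) (u 1) 0"
    define p0 where "p0 = u 2 0"
    define p1 where "p1 = edge_deriv c (u 2) 0"
    have vg: "ga \<noteq> 0" using v IP_vval[where u=u and L=L and c=c, OF c1 c2] ga_def by simp
    have E1: "al * Ch = ga" using c1 edge_end(1)[OF h ee0] n1 al_def ga_def Ch_def by simp
    have E2: "de * Ch - k\<^sup>2 * ga * Sh = 0" using n2 edge_end(2)[OF h ee1] de_def ga_def Ch_def Sh_def by simp
    have E3: "k\<^sup>2 * al * Sh + de + p1 = 0"
      using kf edge_end(2)[OF h ee0] n1 al_def de_def p1_def Sh_def by simp
    have E4: "p1 * Ck k c - k\<^sup>2 * p0 * Sk k c = 0" using n3 edge_end(2)[OF c ee2] p0_def p1_def by simp
    have E5: "p0 = ga" using c2 p0_def ga_def by simp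
    have Ch0: "Ch \<noteq> 0" using E1 vg by auto
    have "2 * k\<^sup>2 * ga * Sh + p1 * Ch = 0" by (rule alg_IP[OF E3 E1 E2])
    then have "2 * k\<^sup>2 * p0 * Sh + p1 * Ch = 0" using E5 by simp
    then show "Qc L c k" unfolding Qc_def using E4 E5 vg Ch0 Ch_def Sh_def by metis
  next
    assume "Qc L c k"
    then obtain p0 p1 where p0: "p0 \<noteq> 0" and E4: "p1 * Ck k c - k\<^sup>2 * p0 * Sk k c = 0"
      and Ch0: "Ch \<noteq> 0" and K: "2 * k\<^sup>2 * p0 * Sh + p1 * Ch = 0"
      unfolding Qc_def Ch_def Sh_def by blast
    define al where "al = p0 / Ch"
    define de where "de = k\<^sup>2 * p0 * Sh / Ch"
    have aC: "al * Ch = p0" using Ch0 by (simp add: al_def)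
    have dC: "de * Ch = k\<^sup>2 * p0 * Sh" using Ch0 by (simp add: de_def)
    define u where "u = (\<lambda>e::nat. if e = 0 then (\<lambda>x. al * Ck k x + 0 * Sk k x) else if e = 1 then (\<lambda>x. p0 * Ck k x + de * Sk k x)
       else (\<lambda>x. p0 * Ck k x + p1 * Sk k x))"
    have u0: "u 0 = (\<lambda>x. al * Ck k x + 0 * Sk k x)" and u1: "u 1 = (\<lambda>x. p0 * Ck k x + de * Sk k x)"
      and u2: "u 2 = (\<lambda>x. p0 * Ck k x + p1 * Sk k x)"
      unfolding u_def by auto
    have u1': "u (Suc 0) = (\<lambda>x. p0 * Ck k x + de * Sk k x)" using u1 by simp
    have ee0: "edge_eq (L/2) (k\<^sup>2) (u 0)" unfolding u0 by (rule edge_build(1)[OF h])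
    have ee1: "edge_eq (L/2) (k\<^sup>2) (u 1)" unfolding u1 by (rule edge_build(1)[OF h])
    have ee2: "edge_eq c (k\<^sup>2) (u 2)" unfolding u2 by (rule edge_build(1)[OF c])
    have D0: "edge_deriv (L/2) (u 0) x = 0 * Ck k x - k\<^sup>2 * al * Sk k x" if "x \<in> {0..L/2}" for x
      unfolding u0 by (rule edge_build(2)[OF h that])
    have D1: "edge_deriv (L/2) (u 1) x = de * Ck k x - k\<^sup>2 * p0 * Sk k x" if "x \<in> {0..L/2}" for x
      unfolding u1 by (rule edge_build(2)[OF h that])
    have D2: "edge_deriv c (u 2) x = p1 * Ck k x - k\<^sup>2 * p0 * Sk k x" if "x \<in> {0..c}" for x
      unfolding u2 by (rule edge_build(2)[OF c that])
    have c1: "u 0 (L/2) = u 1 0" unfolding u0 u1 using aC Ch_def by simp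
    have c2: "u 2 0 = u 1 0" unfolding u2 u1 by simp
    have "Ch * (k\<^sup>2 * al * Sh + de + p1) = 0"
    proof -
      have "Ch * (k\<^sup>2 * al * Sh + de + p1) = k\<^sup>2 * Sh * (al * Ch) + de * Ch + p1 * Ch" by (simp add: algebra_simps)
      also have "\<dots> = 2 * k\<^sup>2 * p0 * Sh + p1 * Ch" unfolding aC dC by (simp add: algebra_simps)
      finally show ?thesis using K by simp
    qed
    then have kf: "k\<^sup>2 * al * Sh + de + p1 = 0" using Ch0 by simp
    have n2: "de * Ch - k\<^sup>2 * p0 * Sh = 0" using dC by simp
    have g: "gsol (IP L c) (k\<^sup>2) {} u"
      unfolding IP_gsol using ee0 ee1 ee2 c1 c2 D0[of 0] D0[of "L/2"] D1[of 0] D1[of "L/2"] D2[of 0] D2[of c] h c kf n2 E4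
      by (simp add: u1' Ch_def Sh_def)
    have nz: "nonzero_on (IP L c) u"
      unfolding nonzero_on_def using p0 h by (auto simp: u1' intro!: bexI[of _ 1] bexI[of _ 0])
    have vv: "vval (IP L c) u 0 = p0" using IP_vval[where u=u and L=L and c=c, OF c1 c2] by (simp add: u1')
    show "\<exists>u. eigenfun (IP L c) (k\<^sup>2) u \<and> vval (IP L c) u 0 \<noteq> 0"
      using g nz vv p0 unfolding eigenfun_def by auto
  qed
qed

lemma part3:
  assumes L: "L > 0" and c: "c > 0"
  shows "(\<exists>u. eigenfun (attach_pendant (loop_graph L) 0 c) lam u
              \<and> vval (attach_pendant (loop_graph L) 0 c) u 0 \<noteq> 0)
       \<longleftrightarrow> (\<exists>u. eigenfun (attach_pendant (interval_graph L) 0 c) lam u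
              \<and> vval (attach_pendant (interval_graph L) 0 c) u 0 \<noteq> 0)"
proof -
  obtain k where k: "lam = k\<^sup>2" using power2_csqrt[of lam] by metis
  show ?thesis unfolding LP_def[symmetric] IP_def[symmetric] k LP_Q[OF L c] IP_Q[OF L c] ..
qed




lemma exp_pow: "exp (of_nat n * z) = exp z ^ n" for z :: complex
  by (simp add: exp_of_nat_mult)

lemma trigF:
  assumes k: "k \<noteq> 0"
  shows "F_sec c k = 4 * \<i> * k * exp (2 * \<i> * k) * exp (\<i> * k * c) *
     (2 * Sk k 2 * Ck k c + Ck k 2 * Sk k c)"
proof -
  define X where "X = exp (\<i> * k)"
  define W where "W = exp (\<i> * k * c)"
  have X0: "X \<noteq> 0" and W0: "W \<noteq> 0" by (auto simp: X_def W_def)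
  have e2: "exp (\<i> * (k * 2)) = X^2" "exp (-(\<i> * (k * 2))) = 1 / X^2"
    unfolding X_def using exp_pow[of 2 "\<i> * k"] by (simp_all add: exp_minus field_simps mult.commute)
  have e4: "exp (4 * \<i> * k) = X^4" unfolding X_def using exp_pow[of 4 "\<i> * k"] by (simp add: mult.assoc)
  have e2k: "exp (2 * \<i> * k) = X^2" unfolding X_def using exp_pow[of 2 "\<i> * k"] by (simp add: mult.assoc)
  have ec: "exp (\<i> * (k * c)) = W" "exp (-(\<i> * (k * c))) = 1 / W"
    unfolding W_def by (simp_all add: exp_minus field_simps mult.commute mult.left_commute)
  have e2c: "exp (2 * \<i> * c * k) = W^2" unfolding W_def using exp_pow[of 2 "\<i> * k * c"]
    by (simp add: mult.commute mult.left_commute)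
  have e2c2: "exp (2 * \<i> * (c + 2) * k) = W^2 * X^4"
  proof -
    have "2 * \<i> * (c + 2) * k = 2 * (\<i> * k * c) + 4 * (\<i> * k)" by (simp add: algebra_simps)
    then show ?thesis unfolding W_def X_def using exp_pow[of 2 "\<i> * k * c"] exp_pow[of 4 "\<i> * k"]
      by (simp add: exp_add)
  qed
  have "F_sec c k = 3 * (W^2 * X^4) + X^4 - 3 - W^2" unfolding F_sec_def e2c e2c2 e4 by simp
  moreover have "4 * \<i> * k * exp (2 * \<i> * k) * exp (\<i> * k * c) *
     (2 * Sk k 2 * Ck k c + Ck k 2 * Sk k c) = 3 * (W^2 * X^4) + X^4 - 3 - W^2"
    unfolding Sk_def Ck_def using k X0 W0
    by (simp add: cos_exp_eq sin_exp_eq e2 ec e2k W_def[symmetric] field_simps) (simp add: algebra_simps power2_eq_square power4_eq_xxxx)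
  ultimately show ?thesis by simp
qed

lemma trigSC:
  assumes k: "k \<noteq> 0"
  shows "Sk k 2 = 0 \<longleftrightarrow> exp (4 * \<i> * k) = 1" "Ck k 2 = 0 \<longleftrightarrow> exp (4 * \<i> * k) = -1"
proof -
  define X where "X = exp (\<i> * k)"
  have X0: "X \<noteq> 0" by (auto simp: X_def)
  have e2: "exp (\<i> * (k * 2)) = X^2" "exp (-(\<i> * (k * 2))) = 1 / X^2"
    unfolding X_def using exp_pow[of 2 "\<i> * k"] by (simp_all add: exp_minus field_simps mult.commute)
  have e4: "exp (4 * \<i> * k) = X^4" unfolding X_def using exp_pow[of 4 "\<i> * k"] by (simp add: mult.assoc)
  have "Sk k 2 = (X^4 - 1) / (2 * \<i> * k * X^2)"
    unfolding Sk_def using k X0 by (simp add: sin_exp_eq e2 field_simps power4_eq_xxxx power2_eq_square)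
  then show "Sk k 2 = 0 \<longleftrightarrow> exp (4 * \<i> * k) = 1" using k X0 by (simp add: e4)
  have "Ck k 2 = (X^4 + 1) / (2 * X^2)"
    unfolding Ck_def using k X0 by (simp add: cos_exp_eq e2 field_simps power4_eq_xxxx power2_eq_square)
  then show "Ck k 2 = 0 \<longleftrightarrow> exp (4 * \<i> * k) = -1" using k X0 by (simp add: e4 add_eq_0_iff) (metis minus_equation_iff)
qed

lemma algD:
  fixes C4 S4 C2 S2 Cc Sc k :: complex
  assumes "C4 = C2^2 - k^2*S2^2" "S4 = 2*S2*C2" "C2^2 + k^2*S2^2 = 1"
  shows "Cc*(1-C4)^2 + k^2*S4*Sc + k^2*Cc*S4^2 = 2*k^2*S2*(2*S2*Cc + C2*Sc)"
  using assms by algebra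

lemma algL:
  fixes a b p1 C4 S4 Cc Sc k :: complex
  assumes E1: "a*C4 + b*S4 = a" and E3: "p1*Cc - k^2*a*Sc = 0" and E4: "b - (b*C4 - k^2*a*S4) + p1 = 0"
  shows "(Cc*(1-C4)^2 + k^2*S4*Sc + k^2*Cc*S4^2)*a = 0"
    "(Cc*(1-C4)^2 + k^2*S4*Sc + k^2*Cc*S4^2)*b = 0"
    "(Cc*(1-C4)^2 + k^2*S4*Sc + k^2*Cc*S4^2)*p1 = 0"
proof -
  have "(Cc*(1-C4)^2 + k^2*S4*Sc + k^2*Cc*S4^2)*a = (-Cc*(1-C4))*(a*C4 + b*S4 - a) + (-S4)*(p1*Cc - k^2*a*Sc) + (S4*Cc)*(b - (b*C4 - k^2*a*S4) + p1)"
    by (simp add: algebra_simps power2_eq_square)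
  then show "(Cc*(1-C4)^2 + k^2*S4*Sc + k^2*Cc*S4^2)*a = 0" using assms by simp
  have "(Cc*(1-C4)^2 + k^2*S4*Sc + k^2*Cc*S4^2)*b = (k^2*Sc + k^2*Cc*S4)*(a*C4 + b*S4 - a) + (C4-1)*(p1*Cc - k^2*a*Sc) + (-(C4-1)*Cc)*(b - (b*C4 - k^2*a*S4) + p1)"
    by (simp add: algebra_simps power2_eq_square)
  then show "(Cc*(1-C4)^2 + k^2*S4*Sc + k^2*Cc*S4^2)*b = 0" using assms by simp
  have "(Cc*(1-C4)^2 + k^2*S4*Sc + k^2*Cc*S4^2)*p1 = (-(k^2*Sc*(1-C4)))*(a*C4 + b*S4 - a) + ((1-C4)^2 + k^2*S4^2)*(p1*Cc - k^2*a*Sc) + (k^2*S4*Sc)*(b - (b*C4 - k^2*a*S4) + p1)"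
    by (simp add: algebra_simps power2_eq_square)
  then show "(Cc*(1-C4)^2 + k^2*S4*Sc + k^2*Cc*S4^2)*p1 = 0" using assms by simp
qed

lemma algI:
  fixes al de p1 C2 S2 Cc Sc k :: complex
  assumes "de*C2 - k^2*al*C2*S2 = 0" "p1*Cc - k^2*al*C2*Sc = 0" "k^2*al*S2 + de + p1 = 0"
  shows "k^2*C2*(2*S2*Cc + C2*Sc)*al = 0" "k^2*C2*(2*S2*Cc + C2*Sc)*de = 0" "k^2*C2*(2*S2*Cc + C2*Sc)*p1 = 0"
proof -
  show "k^2*C2*(2*S2*Cc + C2*Sc)*al = 0" using assms by algebra
  show "k^2*C2*(2*S2*Cc + C2*Sc)*de = 0" using assms by algebra
  show "k^2*C2*(2*S2*Cc + C2*Sc)*p1 = 0" using assms by algebra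
qed

lemma nz:
  assumes l: "l > 0" and z: "\<forall>x\<in>{0..l}. a * Ck k x + b * Sk k x = 0"
  shows "a = 0 \<and> b = 0"
proof -
  have a: "a = 0" using z l by (metis CS_0 atLeastAtMost_iff less_eq_real_def mult_1_right mult_zero_right add.right_neutral order_refl)
  have x0: "(0::real) \<in> {0..l}" using l by simp
  have "((\<lambda>x. 0::complex) has_vector_derivative 0) (at 0 within {0..l})" by (rule has_vector_derivative_const)
  then have "((\<lambda>x. a * Ck k x + b * Sk k x) has_vector_derivative 0) (at 0 within {0..l})"
    by (rule has_vector_derivative_transform_within[OF _ zero_less_one x0]) (use z in auto)
  then have "edge_deriv l (\<lambda>x. a * Ck k x + b * Sk k x) 0 = 0"
    unfolding edge_deriv_def by (rule vector_derivative_within_closed_interval[OF l x0])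
  moreover have "edge_deriv l (\<lambda>x. a * Ck k x + b * Sk k x) 0 = b"
    using edge_build(2)[OF l x0, of a k b] by simp
  ultimately show ?thesis using a by simp
qed




lemma LP_eig:
  assumes L: "L > 0" and c: "c > 0"
  shows "is_eigenvalue (LP L c) (k\<^sup>2) \<longleftrightarrow> (\<exists>a b p1. \<not> (a = 0 \<and> b = 0 \<and> p1 = 0) \<and>
     a * Ck k L + b * Sk k L = a \<and> p1 * Ck k c - k\<^sup>2 * a * Sk k c = 0 \<and>
     b - (b * Ck k L - k\<^sup>2 * a * Sk k L) + p1 = 0)"
proof
  assume "is_eigenvalue (LP L c) (k\<^sup>2)"
  then obtain u where g: "gsol (LP L c) (k\<^sup>2) {} u" and nzu: "nonzero_on (LP L c) u"
    unfolding is_eigenvalue_def eigenfun_def by auto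
  have ee0: "edge_eq L (k\<^sup>2) (u 0)" and ee1: "edge_eq c (k\<^sup>2) (u 1)"
    and c1: "u 0 0 = u 0 L" and c2: "u 1 0 = u 0 L"
    and kf: "edge_deriv L (u 0) 0 - edge_deriv L (u 0) L + edge_deriv c (u 1) 0 = 0"
    and nf: "- edge_deriv c (u 1) c = 0"
    using g by (auto simp: LP_gsol)
  define a where "a = u 0 0"
  define b where "b = edge_deriv L (u 0) 0"
  define p0 where "p0 = u 1 0"
  define p1 where "p1 = edge_deriv c (u 1) 0"
  have E1: "a * Ck k L + b * Sk k L = a" using c1 edge_end(1)[OF L ee0] a_def b_def by simp
  have E2: "p0 = a" using c1 c2 a_def p0_def by simp
  have E3: "b - (b * Ck k L - k\<^sup>2 * a * Sk k L) + p1 = 0"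
    using kf edge_end(2)[OF L ee0] a_def b_def p1_def by simp
  have E4: "p1 * Ck k c - k\<^sup>2 * a * Sk k c = 0" using nf edge_end(2)[OF c ee1] p0_def p1_def E2 by simp
  have "\<not> (a = 0 \<and> b = 0 \<and> p1 = 0)"
  proof
    assume z: "a = 0 \<and> b = 0 \<and> p1 = 0"
    have "u 0 x = 0" if "x \<in> {0..L}" for x using edge_sol[OF L ee0 that] z a_def b_def by simp
    moreover have "u 1 x = 0" if "x \<in> {0..c}" for x using edge_sol[OF c ee1 that] z E2 p0_def p1_def by simp
    ultimately show False using nzu unfolding nonzero_on_def by auto
  qed
  then show "\<exists>a b p1. \<not> (a = 0 \<and> b = 0 \<and> p1 = 0) \<and>
     a * Ck k L + b * Sk k L = a \<and> p1 * Ck k c - k\<^sup>2 * a * Sk k c = 0 \<and>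
     b - (b * Ck k L - k\<^sup>2 * a * Sk k L) + p1 = 0" using E1 E3 E4 by blast
next
  assume "\<exists>a b p1. \<not> (a = 0 \<and> b = 0 \<and> p1 = 0) \<and>
     a * Ck k L + b * Sk k L = a \<and> p1 * Ck k c - k\<^sup>2 * a * Sk k c = 0 \<and>
     b - (b * Ck k L - k\<^sup>2 * a * Sk k L) + p1 = 0"
  then obtain a b p1 where nt: "\<not> (a = 0 \<and> b = 0 \<and> p1 = 0)" and E1: "a * Ck k L + b * Sk k L = a"
    and E4: "p1 * Ck k c - k\<^sup>2 * a * Sk k c = 0" and kf: "b - (b * Ck k L - k\<^sup>2 * a * Sk k L) + p1 = 0"
    by blast
  define u where "u = (\<lambda>e::nat. if e = 0 then (\<lambda>x. a * Ck k x + b * Sk k x) else (\<lambda>x. a * Ck k x + p1 * Sk k x))"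
  have u0: "u 0 = (\<lambda>x. a * Ck k x + b * Sk k x)" and u1: "u 1 = (\<lambda>x. a * Ck k x + p1 * Sk k x)"
    unfolding u_def by auto
  have u1': "u (Suc 0) = (\<lambda>x. a * Ck k x + p1 * Sk k x)" using u1 by simp
  have ee0: "edge_eq L (k\<^sup>2) (u 0)" unfolding u0 by (rule edge_build(1)[OF L])
  have ee1: "edge_eq c (k\<^sup>2) (u 1)" unfolding u1 by (rule edge_build(1)[OF c])
  have D0: "edge_deriv L (u 0) x = b * Ck k x - k\<^sup>2 * a * Sk k x" if "x \<in> {0..L}" for x
    unfolding u0 by (rule edge_build(2)[OF L that])
  have D1: "edge_deriv c (u 1) x = p1 * Ck k x - k\<^sup>2 * a * Sk k x" if "x \<in> {0..c}" for x
    unfolding u1 by (rule edge_build(2)[OF c that])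
  have c1: "u 0 0 = u 0 L" and c2: "u 1 0 = u 0 L" unfolding u0 u1 using E1 by simp_all
  have g: "gsol (LP L c) (k\<^sup>2) {} u"
    unfolding LP_gsol using ee0 ee1 c1 c2 D0[of 0] D0[of L] D1[of 0] D1[of c] L c kf E4
    by (simp add: u1')
  have nzu: "nonzero_on (LP L c) u"
  proof (rule ccontr)
    assume "\<not> nonzero_on (LP L c) u"
    then have z0: "\<forall>x\<in>{0..L}. a * Ck k x + b * Sk k x = 0" and z1: "\<forall>x\<in>{0..c}. a * Ck k x + p1 * Sk k x = 0"
      unfolding nonzero_on_def by (auto simp: u0 u1')
    show False using nz[OF L z0] nz[OF c z1] nt by simp
  qed
  show "is_eigenvalue (LP L c) (k\<^sup>2)" unfolding is_eigenvalue_def eigenfun_def using g nzu by auto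
qed

lemma IP_eig:
  assumes L: "L > 0" and c: "c > 0"
  shows "is_eigenvalue (IP L c) (k\<^sup>2) \<longleftrightarrow> (\<exists>al de p1. \<not> (al = 0 \<and> de = 0 \<and> p1 = 0) \<and>
     de * Ck k (L/2) - k\<^sup>2 * al * Ck k (L/2) * Sk k (L/2) = 0 \<and>
     p1 * Ck k c - k\<^sup>2 * al * Ck k (L/2) * Sk k c = 0 \<and> k\<^sup>2 * al * Sk k (L/2) + de + p1 = 0)"
proof -
  have h: "L/2 > 0" using L by simp
  define Ch where "Ch = Ck k (L/2)"
  define Sh where "Sh = Sk k (L/2)"
  show ?thesis unfolding Ch_def[symmetric] Sh_def[symmetric]
  proof
    assume "is_eigenvalue (IP L c) (k\<^sup>2)"
    then obtain u where g: "gsol (IP L c) (k\<^sup>2) {} u" and nzu: "nonzero_on (IP L c) u"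
      unfolding is_eigenvalue_def eigenfun_def by auto
    have ee0: "edge_eq (L/2) (k\<^sup>2) (u 0)" and ee1: "edge_eq (L/2) (k\<^sup>2) (u 1)" and ee2: "edge_eq c (k\<^sup>2) (u 2)"
      and c1: "u 0 (L/2) = u 1 0" and c2: "u 2 0 = u 1 0"
      and kf: "- edge_deriv (L/2) (u 0) (L/2) + edge_deriv (L/2) (u 1) 0 + edge_deriv c (u 2) 0 = 0"
      and n1: "edge_deriv (L/2) (u 0) 0 = 0" and n2: "- edge_deriv (L/2) (u 1) (L/2) = 0"
      and n3: "- edge_deriv c (u 2) c = 0"
      using g by (auto simp: IP_gsol)
    define al where "al = u 0 0"
    define ga where "ga = u 1 0"
    define de where "de = edge_deriv (L/2) (u 1) 0"
    define p0 where "p0 = u 2 0"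
    define p1 where "p1 = edge_deriv c (u 2) 0"
    have E1: "al * Ch = ga" using c1 edge_end(1)[OF h ee0] n1 al_def ga_def Ch_def by simp
    have E5: "p0 = ga" using c2 p0_def ga_def by simp
    have E2: "de * Ch - k\<^sup>2 * al * Ch * Sh = 0" using n2 edge_end(2)[OF h ee1] de_def ga_def Ch_def Sh_def E1
      by (simp add: mult.commute mult.left_commute)
    have E3: "k\<^sup>2 * al * Sh + de + p1 = 0"
      using kf edge_end(2)[OF h ee0] n1 al_def de_def p1_def Sh_def by simp
    have E4a: "p1 * Ck k c - k\<^sup>2 * p0 * Sk k c = 0" using n3 edge_end(2)[OF c ee2] p0_def p1_def by simp
    have pa: "p0 = al * Ch" using E1 E5 by simp
    have E4: "p1 * Ck k c - k\<^sup>2 * al * Ch * Sk k c = 0" using E4a unfolding pa by (simp add: mult.assoc)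
    have "\<not> (al = 0 \<and> de = 0 \<and> p1 = 0)"
    proof
      assume z: "al = 0 \<and> de = 0 \<and> p1 = 0"
      then have g0: "ga = 0" "p0 = 0" using E1 E5 by auto
      have "u 0 x = 0" if "x \<in> {0..L/2}" for x using edge_sol[OF h ee0 that] z n1 al_def by simp
      moreover have "u 1 x = 0" if "x \<in> {0..L/2}" for x using edge_sol[OF h ee1 that] z g0 ga_def de_def by simp
      moreover have "u 2 x = 0" if "x \<in> {0..c}" for x using edge_sol[OF c ee2 that] z g0 p0_def p1_def by simp
      ultimately show False using nzu unfolding nonzero_on_def by (auto simp: numeral_2_eq_2)
    qed
    then show "\<exists>al de p1. \<not> (al = 0 \<and> de = 0 \<and> p1 = 0) \<and> de * Ch - k\<^sup>2 * al * Ch * Sh = 0 \<and>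
       p1 * Ck k c - k\<^sup>2 * al * Ch * Sk k c = 0 \<and> k\<^sup>2 * al * Sh + de + p1 = 0"
      using E2 E3 E4 by blast
  next
    assume "\<exists>al de p1. \<not> (al = 0 \<and> de = 0 \<and> p1 = 0) \<and> de * Ch - k\<^sup>2 * al * Ch * Sh = 0 \<and>
       p1 * Ck k c - k\<^sup>2 * al * Ch * Sk k c = 0 \<and> k\<^sup>2 * al * Sh + de + p1 = 0"
    then obtain al de p1 where nt: "\<not> (al = 0 \<and> de = 0 \<and> p1 = 0)" and n2: "de * Ch - k\<^sup>2 * al * Ch * Sh = 0"
      and E4: "p1 * Ck k c - k\<^sup>2 * al * Ch * Sk k c = 0" and kf: "k\<^sup>2 * al * Sh + de + p1 = 0"
      by blast
    define p0 where "p0 = al * Ch"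
    define u where "u = (\<lambda>e::nat. if e = 0 then (\<lambda>x. al * Ck k x + 0 * Sk k x) else if e = 1 then (\<lambda>x. p0 * Ck k x + de * Sk k x)
       else (\<lambda>x. p0 * Ck k x + p1 * Sk k x))"
    have u0: "u 0 = (\<lambda>x. al * Ck k x + 0 * Sk k x)" and u1: "u 1 = (\<lambda>x. p0 * Ck k x + de * Sk k x)"
      and u2: "u 2 = (\<lambda>x. p0 * Ck k x + p1 * Sk k x)"
      unfolding u_def by auto
    have u1': "u (Suc 0) = (\<lambda>x. p0 * Ck k x + de * Sk k x)" using u1 by simp
    have ee0: "edge_eq (L/2) (k\<^sup>2) (u 0)" unfolding u0 by (rule edge_build(1)[OF h])
    have ee1: "edge_eq (L/2) (k\<^sup>2) (u 1)" unfolding u1 by (rule edge_build(1)[OF h])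
    have ee2: "edge_eq c (k\<^sup>2) (u 2)" unfolding u2 by (rule edge_build(1)[OF c])
    have D0: "edge_deriv (L/2) (u 0) x = 0 * Ck k x - k\<^sup>2 * al * Sk k x" if "x \<in> {0..L/2}" for x
      unfolding u0 by (rule edge_build(2)[OF h that])
    have D1: "edge_deriv (L/2) (u 1) x = de * Ck k x - k\<^sup>2 * p0 * Sk k x" if "x \<in> {0..L/2}" for x
      unfolding u1 by (rule edge_build(2)[OF h that])
    have D2: "edge_deriv c (u 2) x = p1 * Ck k x - k\<^sup>2 * p0 * Sk k x" if "x \<in> {0..c}" for x
      unfolding u2 by (rule edge_build(2)[OF c that])
    have c1: "u 0 (L/2) = u 1 0" unfolding u0 u1 p0_def Ch_def by simp
    have c2: "u 2 0 = u 1 0" unfolding u2 u1 by simp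
    have n2': "de * Ch - k\<^sup>2 * p0 * Sh = 0" using n2 unfolding p0_def by (simp add: mult.commute mult.left_commute)
    have E4': "p1 * Ck k c - k\<^sup>2 * p0 * Sk k c = 0" using E4 unfolding p0_def by (simp add: mult.commute mult.left_commute)
    have g: "gsol (IP L c) (k\<^sup>2) {} u"
      unfolding IP_gsol using ee0 ee1 ee2 c1 c2 D0[of 0] D0[of "L/2"] D1[of 0] D1[of "L/2"] D2[of 0] D2[of c] h c kf n2' E4'
      by (simp add: u1' Ch_def Sh_def)
    have nzu: "nonzero_on (IP L c) u"
    proof (rule ccontr)
      assume "\<not> nonzero_on (IP L c) u"
      then have z0: "\<forall>x\<in>{0..L/2}. al * Ck k x + 0 * Sk k x = 0" and z1: "\<forall>x\<in>{0..L/2}. p0 * Ck k x + de * Sk k x = 0"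
        and z2: "\<forall>x\<in>{0..c}. p0 * Ck k x + p1 * Sk k x = 0"
        unfolding nonzero_on_def by (auto simp: u0 u1' u2)
      show False using nz[OF h z0] nz[OF h z1] nz[OF c z2] nt by simp
    qed
    show "is_eigenvalue (IP L c) (k\<^sup>2)" unfolding is_eigenvalue_def eigenfun_def using g nzu by auto
  qed
qed

lemma part4:
  assumes c: "c > 0"
  shows "(is_eigenvalue (attach_pendant (loop_graph 4) 0 c) (k\<^sup>2)
            \<longleftrightarrow> (-1 + exp (4 * \<i> * k)) * F_sec c k = 0)
       \<and> (is_eigenvalue (attach_pendant (interval_graph 4) 0 c) (k\<^sup>2)
            \<longleftrightarrow> (1 + exp (4 * \<i> * k)) * F_sec c k = 0)"
proof -
  have L4: "(4::real) > 0" by simp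
  note LE = LP_eig[OF L4 c, of k] and IE = IP_eig[OF L4 c, of k]
  have h2: "(4::real) / 2 = 2" by simp
  define C2 where "C2 = Ck k 2"
  define S2 where "S2 = Sk k 2"
  define Cc where "Cc = Ck k c"
  define Sc where "Sc = Sk k c"
  define C4 where "C4 = Ck k 4"
  define S4 where "S4 = Sk k 4"
  have r1: "C4 = C2^2 - k^2*S2^2" and r2: "S4 = 2*S2*C2"
    using dbl[of k 4] unfolding h2 C2_def S2_def C4_def S4_def by simp_all
  have P: "C2^2 + k^2*S2^2 = 1" unfolding C2_def S2_def by (rule CS_pyth)
  have LE': "is_eigenvalue (LP 4 c) (k\<^sup>2) \<longleftrightarrow> (\<exists>a b p1. \<not> (a = 0 \<and> b = 0 \<and> p1 = 0) \<and>
     a * C4 + b * S4 = a \<and> p1 * Cc - k\<^sup>2 * a * Sc = 0 \<and> b - (b * C4 - k\<^sup>2 * a * S4) + p1 = 0)"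
    using LE unfolding C4_def S4_def Cc_def Sc_def by simp
  have IE': "is_eigenvalue (IP 4 c) (k\<^sup>2) \<longleftrightarrow> (\<exists>al de p1. \<not> (al = 0 \<and> de = 0 \<and> p1 = 0) \<and>
     de * C2 - k\<^sup>2 * al * C2 * S2 = 0 \<and> p1 * Cc - k\<^sup>2 * al * C2 * Sc = 0 \<and> k\<^sup>2 * al * S2 + de + p1 = 0)"
    using IE unfolding C2_def S2_def Cc_def Sc_def h2 by simp
  show ?thesis unfolding LP_def[symmetric] IP_def[symmetric] LE' IE'
  proof (cases "k = 0")
    case True
    have F0: "F_sec c 0 = 0" by (simp add: F_sec_def)
    have C: "C4 = 1" "S4 = 4" "C2 = 1" using True by (simp_all add: C4_def S4_def C2_def Ck_def Sk_def)
    show "(\<exists>a b p1. \<not> (a = 0 \<and> b = 0 \<and> p1 = 0) \<and>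
     a * C4 + b * S4 = a \<and> p1 * Cc - k\<^sup>2 * a * Sc = 0 \<and> b - (b * C4 - k\<^sup>2 * a * S4) + p1 = 0) =
    ((- 1 + exp (4 * \<i> * k)) * F_sec c k = 0) \<and>
    (\<exists>al de p1. \<not> (al = 0 \<and> de = 0 \<and> p1 = 0) \<and>
     de * C2 - k\<^sup>2 * al * C2 * S2 = 0 \<and> p1 * Cc - k\<^sup>2 * al * C2 * Sc = 0 \<and> k\<^sup>2 * al * S2 + de + p1 = 0) =
    ((1 + exp (4 * \<i> * k)) * F_sec c k = 0)"
    proof -
      have L1: "\<exists>a b p1. \<not> (a = 0 \<and> b = 0 \<and> p1 = 0) \<and>
        a * C4 + b * S4 = a \<and> p1 * Cc - k\<^sup>2 * a * Sc = 0 \<and> b - (b * C4 - k\<^sup>2 * a * S4) + p1 = 0"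
        by (rule exI[of _ 1], rule exI[of _ 0], rule exI[of _ 0]) (simp add: True C)
      have I1: "\<exists>al de p1. \<not> (al = 0 \<and> de = 0 \<and> p1 = 0) \<and>
        de * C2 - k\<^sup>2 * al * C2 * S2 = 0 \<and> p1 * Cc - k\<^sup>2 * al * C2 * Sc = 0 \<and> k\<^sup>2 * al * S2 + de + p1 = 0"
        by (rule exI[of _ 1], rule exI[of _ 0], rule exI[of _ 0]) (simp add: True C)
      show ?thesis using L1 I1 F0 True by simp
    qed
  next
    case False
    define G where "G = 2*S2*Cc + C2*Sc"
    have FG: "F_sec c k = 4 * \<i> * k * exp (2 * \<i> * k) * exp (\<i> * k * c) * G"
      using trigF[OF False, of c] unfolding G_def S2_def C2_def Cc_def Sc_def by simp
    have F0: "F_sec c k = 0 \<longleftrightarrow> G = 0" using False unfolding FG by simp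
    have S20: "S2 = 0 \<longleftrightarrow> exp (4 * \<i> * k) = 1" using trigSC(1)[OF False] unfolding S2_def .
    have C20: "C2 = 0 \<longleftrightarrow> exp (4 * \<i> * k) = -1" using trigSC(2)[OF False] unfolding C2_def .
    have RL: "(- 1 + exp (4 * \<i> * k)) * F_sec c k = 0 \<longleftrightarrow> S2 = 0 \<or> G = 0"
    proof -
      have "(- 1 + exp (4 * \<i> * k) = 0) \<longleftrightarrow> exp (4 * \<i> * k) = 1" by auto
      then show ?thesis unfolding mult_eq_0_iff F0 S20 by simp
    qed
    have RI: "(1 + exp (4 * \<i> * k)) * F_sec c k = 0 \<longleftrightarrow> C2 = 0 \<or> G = 0"
    proof -
      have "(1 + exp (4 * \<i> * k) = 0) \<longleftrightarrow> exp (4 * \<i> * k) = -1" by (auto simp: add_eq_0_iff)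
      then show ?thesis unfolding mult_eq_0_iff F0 C20 by simp
    qed
    have DL: "Cc*(1-C4)^2 + k^2*S4*Sc + k^2*Cc*S4^2 = 2*k^2*S2*G"
      unfolding G_def by (rule algD[OF r1 r2 P])
    have LL: "(\<exists>a b p1. \<not> (a = 0 \<and> b = 0 \<and> p1 = 0) \<and>
     a * C4 + b * S4 = a \<and> p1 * Cc - k\<^sup>2 * a * Sc = 0 \<and> b - (b * C4 - k\<^sup>2 * a * S4) + p1 = 0)
      \<longleftrightarrow> S2 = 0 \<or> G = 0"
    proof
      assume "\<exists>a b p1. \<not> (a = 0 \<and> b = 0 \<and> p1 = 0) \<and>
        a * C4 + b * S4 = a \<and> p1 * Cc - k\<^sup>2 * a * Sc = 0 \<and> b - (b * C4 - k\<^sup>2 * a * S4) + p1 = 0"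
      then obtain a b p1 where nt: "\<not> (a = 0 \<and> b = 0 \<and> p1 = 0)" and E1: "a * C4 + b * S4 = a"
        and E3: "p1 * Cc - k\<^sup>2 * a * Sc = 0" and E4: "b - (b * C4 - k\<^sup>2 * a * S4) + p1 = 0" by blast
      note A = algL[OF E1 E3 E4, unfolded DL]
      have "2*k^2*S2*G = 0" using A nt by auto
      then show "S2 = 0 \<or> G = 0" using False by simp
    next
      assume "S2 = 0 \<or> G = 0"
      then show "\<exists>a b p1. \<not> (a = 0 \<and> b = 0 \<and> p1 = 0) \<and>
        a * C4 + b * S4 = a \<and> p1 * Cc - k\<^sup>2 * a * Sc = 0 \<and> b - (b * C4 - k\<^sup>2 * a * S4) + p1 = 0"
      proof
        assume S: "S2 = 0"
        have "C4 = 1" using r1 P S by (simp add: power2_eq_square)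
        then show ?thesis using r2 S by (intro exI[of _ 0] exI[of _ 1]) simp
      next
        assume G: "G = 0"
        have nt: "\<not> (C2 = 0 \<and> k\<^sup>2 * S2 = 0 \<and> - (2 * k\<^sup>2 * S2) = 0)"
          using P by (auto simp: power2_eq_square)
        have e1: "C2 * C4 + (k\<^sup>2 * S2) * S4 = C2" using r1 r2 P by algebra
        have e3: "(- (2 * k\<^sup>2 * S2)) * Cc - k\<^sup>2 * C2 * Sc = 0"
        proof -
          have "(- (2 * k\<^sup>2 * S2)) * Cc - k\<^sup>2 * C2 * Sc = - k\<^sup>2 * G" unfolding G_def by (simp add: algebra_simps)
          then show ?thesis using G by simp
        qed
        have e4: "k\<^sup>2 * S2 - (k\<^sup>2 * S2 * C4 - k\<^sup>2 * C2 * S4) + (- (2 * k\<^sup>2 * S2)) = 0"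
          using r1 r2 P by algebra
        show ?thesis using nt e1 e3 e4 by blast
      qed
    qed
    have II: "(\<exists>al de p1. \<not> (al = 0 \<and> de = 0 \<and> p1 = 0) \<and>
     de * C2 - k\<^sup>2 * al * C2 * S2 = 0 \<and> p1 * Cc - k\<^sup>2 * al * C2 * Sc = 0 \<and> k\<^sup>2 * al * S2 + de + p1 = 0)
      \<longleftrightarrow> C2 = 0 \<or> G = 0"
    proof
      assume "\<exists>al de p1. \<not> (al = 0 \<and> de = 0 \<and> p1 = 0) \<and>
        de * C2 - k\<^sup>2 * al * C2 * S2 = 0 \<and> p1 * Cc - k\<^sup>2 * al * C2 * Sc = 0 \<and> k\<^sup>2 * al * S2 + de + p1 = 0"
      then obtain al de p1 where nt: "\<not> (al = 0 \<and> de = 0 \<and> p1 = 0)" and E1: "de * C2 - k\<^sup>2 * al * C2 * S2 = 0"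
        and E2: "p1 * Cc - k\<^sup>2 * al * C2 * Sc = 0" and E3: "k\<^sup>2 * al * S2 + de + p1 = 0" by blast
      note A = algI[OF E1 E2 E3, folded G_def]
      have "k^2*C2*G = 0" using A nt by auto
      then show "C2 = 0 \<or> G = 0" using False by simp
    next
      assume "C2 = 0 \<or> G = 0"
      then show "\<exists>al de p1. \<not> (al = 0 \<and> de = 0 \<and> p1 = 0) \<and>
        de * C2 - k\<^sup>2 * al * C2 * S2 = 0 \<and> p1 * Cc - k\<^sup>2 * al * C2 * Sc = 0 \<and> k\<^sup>2 * al * S2 + de + p1 = 0"
      proof
        assume C: "C2 = 0"
        show ?thesis using C by (intro exI[of _ 1] exI[of _ "- (k\<^sup>2 * S2)"] exI[of _ 0]) simp
      next
        assume G: "G = 0"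
        have e2: "(- (2 * k\<^sup>2 * S2)) * Cc - k\<^sup>2 * 1 * C2 * Sc = 0"
        proof -
          have "(- (2 * k\<^sup>2 * S2)) * Cc - k\<^sup>2 * 1 * C2 * Sc = - k\<^sup>2 * G" unfolding G_def by (simp add: algebra_simps)
          then show ?thesis using G by simp
        qed
        show ?thesis using e2 by (intro exI[of _ 1] exI[of _ "k\<^sup>2 * S2"] exI[of _ "- (2 * k\<^sup>2 * S2)"])
          (simp add: algebra_simps)
      qed
    qed
    show "(\<exists>a b p1. \<not> (a = 0 \<and> b = 0 \<and> p1 = 0) \<and>
     a * C4 + b * S4 = a \<and> p1 * Cc - k\<^sup>2 * a * Sc = 0 \<and> b - (b * C4 - k\<^sup>2 * a * S4) + p1 = 0) =
    ((- 1 + exp (4 * \<i> * k)) * F_sec c k = 0) \<and>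
    (\<exists>al de p1. \<not> (al = 0 \<and> de = 0 \<and> p1 = 0) \<and>
     de * C2 - k\<^sup>2 * al * C2 * S2 = 0 \<and> p1 * Cc - k\<^sup>2 * al * C2 * Sc = 0 \<and> k\<^sup>2 * al * S2 + de + p1 = 0) =
    ((1 + exp (4 * \<i> * k)) * F_sec c k = 0)"
      unfolding LL II RL RI by simp
  qed
qed


theorem mainTheorem8:
  fixes L :: real
  assumes "L > 0"
  shows "(\<exists>S :: complex set. (\<forall>z. \<not> z islimpt S) \<and>
           (\<forall>k. k \<notin> S \<longrightarrow> M_defined (loop_graph L) 0 k \<and> M_defined (interval_graph L) 0 k \<and>
                M_fun (loop_graph L) 0 k = M_fun (interval_graph L) 0 k))
    \<and> \<not> isospectral (loop_graph L) (interval_graph L)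
    \<and> (\<forall>c>0. \<forall>lam.
         (\<exists>u. eigenfun (attach_pendant (loop_graph L) 0 c) lam u
              \<and> vval (attach_pendant (loop_graph L) 0 c) u 0 \<noteq> 0)
       \<longleftrightarrow> (\<exists>u. eigenfun (attach_pendant (interval_graph L) 0 c) lam u
              \<and> vval (attach_pendant (interval_graph L) 0 c) u 0 \<noteq> 0))
    \<and> (\<forall>c>0. \<forall>k::complex.
         (is_eigenvalue (attach_pendant (loop_graph 4) 0 c) (k\<^sup>2)
            \<longleftrightarrow> (-1 + exp (4 * \<i> * k)) * F_sec c k = 0)
       \<and> (is_eigenvalue (attach_pendant (interval_graph 4) 0 c) (k\<^sup>2)
            \<longleftrightarrow> (1 + exp (4 * \<i> * k)) * F_sec c k = 0))"
  using part1[OF assms] part2[OF assms] part3[OF assms] part4 by blast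

end
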